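(* Let $n=n_1n_2\cdots n_\ell>2$ with integers $n_i\ge 2$, and let $U=F_{(n_1,\dots,n_\ell)}=F_{n_1}\otimes\cdots\otimes F_{n_\ell}$ (with modes labelled as in the context). Consider the $n$-photon distillation protocol determined by $U$ with input state $\rho^{(n)}(\epsilon)$ (uniform random source model with any fixed $R\ge 1$, or its orthogonal-bad-bits limit). Then the output error rate satisfies $$e_n(\epsilon)=\frac{\epsilon}{n}+O(\epsilon^2)\qquad(\epsilon\to 0,\ n\text{ fixed}).$$ In particular this applies to $U=F_n$ ($n\ge 3$) and to $U=H_n=H^{\otimes r}$ ($n=2^r\ge 4$, $H$ the $2\times 2$ Hadamard matrix).
   Context: For an integer $m\ge 2$, $F_m=\frac{1}{\sqrt m}(\omega_m^{ij})_{0\le i,j\le m-1}$ with $\omega_m=e^{2\pi i/m}$; note $F_2=H$. The $n=n_1\cdots n_\ell$ modes of $F_{(n_1,\dots,n_\ell)}$ are labelled $0,\dots,n-1$ by identifying the basis vector $|m_1\rangle\otimes\cdots\otimes|m_\ell\rangle$ ($0\le m_i<n_i$) of $\mathbb{C}^{n_1}\otimes\cdots\otimes\mathbb{C}^{n_\ell}$ with mode $m_1+n_1m_2+n_1n_2m_3+\cdots+(n_1\cdots n_{\ell-1})m_\ell$. Photons: each photon has an external mode in $\{0,\dots,n-1\}$ and an internal state in a Hilbert space $\mathcal{H}_{\rm int}$ with fixed orthonormal basis $\{|\xi_0\rangle,|\xi_1\rangle,\dots\}$. $a_i^\dagger[\xi]$ creates a (bosonic) photon in mode $i$ with internal state $\xi$;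 $|\vec 0\rangle$ is the vacuum. For an $n\times n$ unitary $U$, the linear optical unitary $\hat U$ acts on the external modes only: $a_j^\dagger[\xi]\mapsto\sum_i U_{ij}a_i^\dagger[\xi]$. $|s_0,\dots,s_{n-1}\rangle$ denotes the Fock state (no internal degrees of freedom) with $s_i$ photons in mode $i$; $|1,\dots,1\rangle$ has one photon in each mode. Photon-number-resolving detection (PNRD) on a set of modes measures the number of photons in each of those modes, regardless of internal state. Ideal patterns of $U$: tuples $(s_0,\dots,s_{n-1})$ of nonnegative integers with $\sum s_i=n$, $s_0=1$ and $\langle s_0,\dots,s_{n-1}|\hat U|1,\dots,1\rangle\ne 0$. Distillation protocol for $U$ with input state $\sigma$ (a state of $n$ photons in $n$ distinct modes): apply $\hat U$; perform PNRD on modes $1,\dots,n-1$, getting $(s_1,\dots,s_{n-1})$; set $s_0=n-\sum_{j\ge1}s_j$; the protocol heralds success iff $(s_0,\dots,s_{n-1})$ is an ideal pattern. The heralding rate $h_n(\sigma)$ is the probability of success. The output error rate $e_n(\sigma)$ is the conditional probability, given success, that the single photon in mode $0$ has internal state $|\xi_i\rangle$ for some $i\ge1$ (computed via the projective measurement onto the normalized states $a^\dagger_{m_0}[\xi_{i_0}]\cdots a^\dagger_{m_{n-1}}[\xi_{i_{n-1}}]|\vec 0\rangle$). Input model: $\rho^{(n)}(\epsilon)$ is the mixture over states $a_0^\dagger[\xi_{j_0}]\cdots a_{n-1}^\dagger[\xi_{j_{n-1}}]|\vec0\rangle$ in which the photon in mode $i$ independently has internal state $\xi_0$ with probability $1-\epsilon$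 and otherwise an error state: in the uniform random source (URS) model with parameter $R\ge1$, each $\xi_j$, $1\le j\le R$, with probability $\epsilon/R$; in the orthogonal-bad-bits (OBB) limit, the photon in mode $i$ has state $\xi_{i+1}$ with probability $\epsilon$. Write $h_n(\epsilon)=h_n(\rho^{(n)}(\epsilon))$ and $e_n(\epsilon)=e_n(\rho^{(n)}(\epsilon))$. *)

theory Defs
  imports Complex_Main "HOL-Library.Multiset" "HOL-Library.FuncSet" "HOL-Library.Landau_Symbols"
begin

definition fourier :: "nat \<Rightarrow> nat \<Rightarrow> nat \<Rightarrow> complex" where
  "fourier m i j = exp (2 * complex_of_real pi * \<i> / of_nat m) ^ (i * j) / complex_of_real (sqrt (real m))"

text \<open>t-th digit of mode a in the mixed radix (n_1,...,n_l), least significant first: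
  a = m_1 + n_1 m_2 + n_1 n_2 m_3 + ...\<close>
definition digit :: "nat list \<Rightarrow> nat \<Rightarrow> nat \<Rightarrow> nat" where
  "digit ns t a = (a div prod_list (take t ns)) mod (ns ! t)"

definition fourier_tensor :: "nat list \<Rightarrow> nat \<Rightarrow> nat \<Rightarrow> complex" where
  "fourier_tensor ns a b = (\<Prod>t<length ns. fourier (ns ! t) (digit ns t a) (digit ns t b))"

text \<open>Input: photon in input mode i (i<n) has internal state xi_(j i).
  Expanding hat U (prod_i a_i^dag[xi_(j i)]) |0> = sum over k : [n] -> [n] of
  (prod_i U (k i) i) prod_i a_(k i)^dag[xi_(j i)] |0>.  The state prod a^dag |0> depends
  only on the multiset of (mode, internal label) pairs, and equals sqrt(prod_x M(x)!)
  times the normalised basis state |M>.\<close>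
definition out_ms :: "nat \<Rightarrow> (nat \<Rightarrow> nat) \<Rightarrow> (nat \<Rightarrow> nat) \<Rightarrow> (nat \<times> nat) multiset" where
  "out_ms n j k = mset (map (\<lambda>i. (k i, j i)) [0..<n])"

definition out_amp_sum :: "(nat \<Rightarrow> nat \<Rightarrow> complex) \<Rightarrow> nat \<Rightarrow> (nat \<Rightarrow> nat) \<Rightarrow> (nat \<times> nat) multiset \<Rightarrow> complex" where
  "out_amp_sum U n j M = (\<Sum>k\<in>{k \<in> {0..<n} \<rightarrow>\<^sub>E {0..<n}. out_ms n j k = M}. \<Prod>i<n. U (k i) i)"

definition out_amp :: "(nat \<Rightarrow> nat \<Rightarrow> complex) \<Rightarrow> nat \<Rightarrow> (nat \<Rightarrow> nat) \<Rightarrow> (nat \<times> nat) multiset \<Rightarrow> complex" where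
  "out_amp U n j M = complex_of_real (sqrt (\<Prod>x\<in>set_mset M. fact (count M x))) * out_amp_sum U n j M"

definition out_prob :: "(nat \<Rightarrow> nat \<Rightarrow> complex) \<Rightarrow> nat \<Rightarrow> (nat \<Rightarrow> nat) \<Rightarrow> (nat \<times> nat) multiset \<Rightarrow> real" where
  "out_prob U n j M = (cmod (out_amp U n j M))\<^sup>2"

definition outcomes :: "nat \<Rightarrow> (nat \<Rightarrow> nat) \<Rightarrow> (nat \<times> nat) multiset set" where
  "outcomes n j = out_ms n j ` ({0..<n} \<rightarrow>\<^sub>E {0..<n})"

definition mode_count :: "(nat \<times> nat) multiset \<Rightarrow> nat \<Rightarrow> nat" where
  "mode_count M m = size (filter_mset (\<lambda>x. fst x = m) M)"

text \<open><s_0,...,s_(n-1)| hat U |1,...,1> (no internal degrees of freedom).\<close>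
definition fock_amp :: "(nat \<Rightarrow> nat \<Rightarrow> complex) \<Rightarrow> nat \<Rightarrow> (nat \<Rightarrow> nat) \<Rightarrow> complex" where
  "fock_amp U n s = complex_of_real (sqrt (\<Prod>m<n. fact (s m))) *
     (\<Sum>k\<in>{k \<in> {0..<n} \<rightarrow>\<^sub>E {0..<n}. \<forall>m<n. card {i. i < n \<and> k i = m} = s m}. \<Prod>i<n. U (k i) i)"

definition ideal_pattern :: "(nat \<Rightarrow> nat \<Rightarrow> complex) \<Rightarrow> nat \<Rightarrow> (nat \<Rightarrow> nat) \<Rightarrow> bool" where
  "ideal_pattern U n s \<longleftrightarrow> (\<Sum>m<n. s m) = n \<and> s 0 = 1 \<and> fock_amp U n s \<noteq> 0"

text \<open>PNRD on modes 1..n-1; s_0 := n - sum of the others.\<close>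
definition herald_pattern :: "nat \<Rightarrow> (nat \<times> nat) multiset \<Rightarrow> nat \<Rightarrow> nat" where
  "herald_pattern n M m = (if m = 0 then n - (\<Sum>i\<in>{1..<n}. mode_count M i) else mode_count M m)"

definition success :: "(nat \<Rightarrow> nat \<Rightarrow> complex) \<Rightarrow> nat \<Rightarrow> (nat \<times> nat) multiset \<Rightarrow> bool" where
  "success U n M \<longleftrightarrow> ideal_pattern U n (herald_pattern n M)"

definition output_error :: "(nat \<times> nat) multiset \<Rightarrow> bool" where
  "output_error M \<longleftrightarrow> (\<exists>c\<ge>1. (0, c) \<in># M)"

text \<open>Input state: mixture over label assignments j in Js with weights p j.\<close>
definition heralding_rate :: "(nat \<Rightarrow> nat \<Rightarrow> complex) \<Rightarrow> nat \<Rightarrow> (nat \<Rightarrow> nat) set \<Rightarrow> ((nat \<Rightarrow> nat) \<Rightarrow> real) \<Rightarrow> real" where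
  "heralding_rate U n Js p =
     (\<Sum>j\<in>Js. p j * (\<Sum>M\<in>{M \<in> outcomes n j. success U n M}. out_prob U n j M))"

definition error_joint :: "(nat \<Rightarrow> nat \<Rightarrow> complex) \<Rightarrow> nat \<Rightarrow> (nat \<Rightarrow> nat) set \<Rightarrow> ((nat \<Rightarrow> nat) \<Rightarrow> real) \<Rightarrow> real" where
  "error_joint U n Js p =
     (\<Sum>j\<in>Js. p j * (\<Sum>M\<in>{M \<in> outcomes n j. success U n M \<and> output_error M}. out_prob U n j M))"

definition error_rate :: "(nat \<Rightarrow> nat \<Rightarrow> complex) \<Rightarrow> nat \<Rightarrow> (nat \<Rightarrow> nat) set \<Rightarrow> ((nat \<Rightarrow> nat) \<Rightarrow> real) \<Rightarrow> real" where
  "error_rate U n Js p = error_joint U n Js p / heralding_rate U n Js p"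

definition urs_labels :: "nat \<Rightarrow> nat \<Rightarrow> (nat \<Rightarrow> nat) set" where
  "urs_labels n R = {0..<n} \<rightarrow>\<^sub>E {0..R}"

definition urs_prob :: "nat \<Rightarrow> nat \<Rightarrow> real \<Rightarrow> (nat \<Rightarrow> nat) \<Rightarrow> real" where
  "urs_prob n R \<epsilon> j = (\<Prod>i<n. if j i = 0 then 1 - \<epsilon> else \<epsilon> / real R)"

definition obb_labels :: "nat \<Rightarrow> (nat \<Rightarrow> nat) set" where
  "obb_labels n = PiE {0..<n} (\<lambda>i. {0, Suc i})"

definition obb_prob :: "nat \<Rightarrow> real \<Rightarrow> (nat \<Rightarrow> nat) \<Rightarrow> real" where
  "obb_prob n \<epsilon> j = (\<Prod>i<n. if j i = 0 then 1 - \<epsilon> else \<epsilon>)"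

end

theory Submission
  imports Defs
begin

definition om :: "nat \<Rightarrow> complex" where "om m = exp (2 * complex_of_real pi * \<i> / of_nat m)"

lemma fourier_om: "fourier m a b = om m ^ (a*b) / complex_of_real (sqrt (real m))"
  by (simp add: fourier_def om_def)

lemma om_pow_m: "m > 0 \<Longrightarrow> om m ^ m = 1"
proof -
  assume "m > 0"
  have e: "of_nat m * (2 * complex_of_real pi * \<i> / of_nat m) = 2 * complex_of_real pi * \<i>"
    using \<open>m>0\<close> by (simp add: field_simps)
  have "om m ^ m = exp (of_nat m * (2 * complex_of_real pi * \<i> / of_nat m))"
    by (simp only: om_def exp_of_nat_mult)
  also have "\<dots> = exp (2 * complex_of_real pi * \<i>)" by (simp only: e)
  also have "\<dots> = 1" by (simp add: exp_eq_one_iff) 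
  finally show ?thesis .
qed

lemma om_pow_mod: "m > 0 \<Longrightarrow> om m ^ k = om m ^ (k mod m)"
proof -
  assume m: "m > 0"
  have "om m ^ k = om m ^ (m * (k div m) + k mod m)" by simp
  also have "\<dots> = (om m ^ m) ^ (k div m) * om m ^ (k mod m)" by (simp only: power_add power_mult)
  finally show ?thesis using om_pow_m[OF m] by simp
qed

lemma om_pow_ne1: assumes "0 < k" "k < m" shows "om m ^ k \<noteq> 1"
proof
  assume h: "om m ^ k = 1"
  have "om m ^ k = exp (of_nat k * (2 * complex_of_real pi * \<i> / of_nat m))"
    by (simp only: om_def exp_of_nat_mult)
  also have "\<dots> = cis (2 * pi * k / m)" by (simp add: cis_conv_exp field_simps)
  finally have "cos (2 * pi * k / m) = 1" using h by (metis cis.sel(1) one_complex.sel(1))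
  then obtain z :: int where z: "2 * pi * k / m = z * 2 * pi" by (auto simp: cos_one_2pi_int)
  hence "real k / m = z" using assms pi_gt_zero by (auto simp: field_simps)
  moreover have "0 < real k / m" "real k / m < 1" using assms by auto
  ultimately have "(0::real) < of_int z \<and> of_int z < (1::real)" by simp
  hence "0 < z \<and> z < 1" by linarith
  thus False by linarith
qed

lemma fourier_shift: assumes "m > 0"
  shows "fourier m x ((y + d) mod m) = fourier m x y * om m ^ (x * d)"
proof -
  have "om m ^ (x * ((y + d) mod m)) = om m ^ ((x * ((y + d) mod m)) mod m)" using om_pow_mod[OF assms] by blast
  also have "(x * ((y + d) mod m)) mod m = (x * (y + d)) mod m" by (simp add: mod_mult_right_eq)
  also have "om m ^ \<dots> = om m ^ (x * (y + d))" using om_pow_mod[OF assms] by metis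
  also have "\<dots> = om m ^ (x*y) * om m ^ (x*d)" by (simp add: distrib_left power_add)
  finally show ?thesis by (simp add: fourier_om)
qed

lemma fourier_row0: "fourier m 0 y = 1 / complex_of_real (sqrt (real m))"
  by (simp add: fourier_om)

lemma fourier_colsum: assumes "m > 0" "y < m"
  shows "(\<Sum>x<m. fourier m x y) = (if y = 0 then complex_of_real (sqrt (real m)) else 0)"
proof (cases "y = 0")
  case True
  have f: "\<And>x. fourier m x y = 1 / complex_of_real (sqrt (real m))" using True by (simp add: fourier_om)
  have "(\<Sum>x<m. fourier m x y) = of_nat m * (1 / complex_of_real (sqrt (real m)))"
    by (simp only: f sum_constant card_lessThan)
  also have "\<dots> = complex_of_real (sqrt (real m))"
  proof -
    have s: "complex_of_nat m = complex_of_real (sqrt (real m)) * complex_of_real (sqrt (real m))"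
    proof -
      have "real m = sqrt (real m) * sqrt (real m)" by simp
      hence "complex_of_real (real m) = complex_of_real (sqrt (real m) * sqrt (real m))" by (rule arg_cong)
      thus ?thesis by (simp only: of_real_of_nat_eq of_real_mult)
    qed
    have "sqrt (real m) \<noteq> 0" using assms by simp
    thus ?thesis by (simp add: s)
  qed
  finally show ?thesis using True by simp
next
  case False
  have ne: "om m ^ y \<noteq> 1" using om_pow_ne1[of y m] False assms by auto
  have "(\<Sum>x<m. om m ^ (x*y)) = (\<Sum>x<m. (om m ^ y) ^ x)" 
    by (intro sum.cong refl) (simp add: power_mult[symmetric] mult.commute)
  also have "\<dots> = (1 - (om m ^ y) ^ m) / (1 - om m ^ y)" using ne by (simp add: sum_gp_strict)
  also have "(om m ^ y) ^ m = 1"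
  proof -
    have "(om m ^ y) ^ m = (om m ^ m) ^ y" by (simp only: power_mult[symmetric] mult.commute)
    thus ?thesis using om_pow_m[OF assms(1)] by simp
  qed
  finally have z: "(\<Sum>x<m. om m ^ (x*y)) = 0" by simp
  have "(\<Sum>x<m. fourier m x y) = (\<Sum>x<m. om m ^ (x*y)) / complex_of_real (sqrt (real m))"
    by (simp only: fourier_om sum_divide_distrib)
  then show ?thesis using False z by simp
qed

lemma digit_cons0: "digit (m#ns) 0 a = a mod m"
  by (simp add: digit_def)

lemma digit_consS: "digit (m#ns) (Suc t) a = digit ns t (a div m)"
  by (simp add: digit_def div_mult2_eq)

lemma ft_nil: "fourier_tensor [] a b = 1"
  by (simp add: fourier_tensor_def)

lemma ft_cons: "fourier_tensor (m#ns) a b = fourier m (a mod m) (b mod m) * fourier_tensor ns (a div m) (b div m)"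
  unfolding fourier_tensor_def
  by (simp only: length_Cons prod.lessThan_Suc_shift digit_cons0 digit_consS nth_Cons_0 nth_Cons_Suc)

lemma mod_add_cancel_nat: "(x + d) mod m = (y + d) mod (m::nat) \<Longrightarrow> x mod m = y mod m"
proof -
  assume h: "(x + d) mod m = (y + d) mod m"
  have "int ((x+d) mod m) = int ((y+d) mod m)" using h by simp
  hence "(int x + int d) mod int m = (int y + int d) mod int m" by (simp add: of_nat_mod)
  hence "int m dvd (int x + int d) - (int y + int d)" by (simp only: mod_eq_dvd_iff)
  hence "int m dvd int x - int y" by simp
  hence "int x mod int m = int y mod int m" by (simp only: mod_eq_dvd_iff)
  hence "int (x mod m) = int (y mod m)" by (simp add: of_nat_mod)
  thus ?thesis by simp
qed

lemma sum_split_mult: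
  fixes h :: "nat \<Rightarrow> 'a::comm_monoid_add"
  assumes "m > 0"
  shows "(\<Sum>a<m*P. h a) = (\<Sum>x<m. \<Sum>y<P. h (x + m*y))"
proof -
  have "(\<Sum>a<m*P. h a) = (\<Sum>p\<in>{..<m}\<times>{..<P}. h (fst p + m * snd p))"
  proof (rule sum.reindex_bij_witness[where j="\<lambda>a. (a mod m, a div m)" and i="\<lambda>p. fst p + m * snd p"])
    fix a assume a: "a \<in> {..<m*P}"
    show "fst (a mod m, a div m) + m * snd (a mod m, a div m) = a" by simp
    show "(a mod m, a div m) \<in> {..<m}\<times>{..<P}" using a assms
      by (auto simp: less_mult_imp_div_less mult.commute)
    show "h (fst (a mod m, a div m) + m * snd (a mod m, a div m)) = h a" by simp
  next
    fix p assume p: "p \<in> {..<m}\<times>{..<P}"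
    thus "((fst p + m * snd p) mod m, (fst p + m * snd p) div m) = p" by (auto simp: prod_eq_iff)
    have "fst p + m * snd p < m + m * snd p" using p by auto
    also have "\<dots> = m * (snd p + 1)" by simp
    also have "\<dots> \<le> m * P" using p by (intro mult_le_mono2) auto
    finally show "fst p + m * snd p \<in> {..<m*P}" by simp
  qed
  also have "\<dots> = (\<Sum>x<m. \<Sum>y<P. h (x + m*y))" by (simp add: sum.cartesian_product case_prod_beta)
  finally show ?thesis .
qed

lemma ft_row0: "fourier_tensor ns 0 b = 1 / complex_of_real (sqrt (real (prod_list ns)))"
proof (induction ns arbitrary: b)
  case Nil thus ?case by (simp add: ft_nil)
next
  case (Cons m ns)
  show ?case by (simp add: ft_cons Cons fourier_row0 real_sqrt_mult)
qed

lemma ft_colsum: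
  assumes "\<forall>m\<in>set ns. m > 0" "b < prod_list ns"
  shows "(\<Sum>a<prod_list ns. fourier_tensor ns a b) = (if b = 0 then complex_of_real (sqrt (real (prod_list ns))) else 0)"
  using assms
proof (induction ns arbitrary: b)
  case Nil thus ?case by (simp add: ft_nil)
next
  case (Cons m ns)
  have m: "m > 0" using Cons.prems by auto
  have b1: "b mod m < m" using m by simp
  have b2: "b div m < prod_list ns" using Cons.prems by (simp add: less_mult_imp_div_less mult.commute)
  have "(\<Sum>a<prod_list (m#ns). fourier_tensor (m#ns) a b)
      = (\<Sum>x<m. \<Sum>y<prod_list ns. fourier m x (b mod m) * fourier_tensor ns y (b div m))"
    by (simp only: prod_list.Cons sum_split_mult[OF m] ft_cons) simp
  also have "\<dots> = (\<Sum>x<m. fourier m x (b mod m)) * (\<Sum>y<prod_list ns. fourier_tensor ns y (b div m))"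
    by (simp add: sum_product)
  also have "\<dots> = (if b mod m = 0 then complex_of_real (sqrt (real m)) else 0) *
       (if b div m = 0 then complex_of_real (sqrt (real (prod_list ns))) else 0)"
    using Cons.IH[OF _ b2] Cons.prems fourier_colsum[OF m b1] by simp
  also have "\<dots> = (if b = 0 then complex_of_real (sqrt (real (prod_list (m#ns)))) else 0)"
  proof -
    have "b = 0 \<longleftrightarrow> b mod m = 0 \<and> b div m = 0"
    proof
      assume "b mod m = 0 \<and> b div m = 0"
      thus "b = 0" using div_mult_mod_eq[of b m] by simp
    qed simp
    thus ?thesis by (auto simp: real_sqrt_mult)
  qed
  finally show ?case .
qed

lemma ft_shift:
  assumes "\<forall>m\<in>set ns. m > 0" "i < prod_list ns" "i' < prod_list ns"
  shows "\<exists>\<sigma> \<phi>. inj_on \<sigma> {..<prod_list ns} \<and> \<sigma> ` {..<prod_list ns} \<subseteq> {..<prod_list ns} \<and> \<sigma> i = i' \<and> \<phi> 0 = 1 \<and>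
     (\<forall>a<prod_list ns. \<forall>b<prod_list ns. fourier_tensor ns a (\<sigma> b) = fourier_tensor ns a b * \<phi> a)"
  using assms
proof (induction ns arbitrary: i i')
  case Nil
  thus ?case by (intro exI[of _ id] exI[of _ "\<lambda>_. 1"]) (auto simp: ft_nil)
next
  case (Cons m ns)
  have m: "m > 0" using Cons.prems by auto
  define P where "P = prod_list ns"
  have i1: "i div m < P" "i' div m < P" using Cons.prems by (auto simp: less_mult_imp_div_less mult.commute P_def)
  obtain \<sigma> \<phi> where s: "inj_on \<sigma> {..<P}" "\<sigma> ` {..<P} \<subseteq> {..<P}" "\<sigma> (i div m) = i' div m" "\<phi> 0 = 1"
     "\<forall>a<P. \<forall>b<P. fourier_tensor ns a (\<sigma> b) = fourier_tensor ns a b * \<phi> a"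
    using Cons.IH[OF _ i1[unfolded P_def]] Cons.prems unfolding P_def by auto
  define d where "d = i' mod m + (m - i mod m)"
  define \<sigma>' where "\<sigma>' = (\<lambda>b. (b mod m + d) mod m + m * \<sigma> (b div m))"
  define \<phi>' where "\<phi>' = (\<lambda>a. om m ^ ((a mod m) * d) * \<phi> (a div m))"
  have lt: "x + m * y < m * P" if "x < m" "y < P" for x y
  proof -
    have "x + m * y < m + m * y" using that by auto
    also have "\<dots> = m * (y + 1)" by simp
    also have "\<dots> \<le> m * P" using that by (intro mult_le_mono2) auto
    finally show ?thesis .
  qed
  have md: "\<sigma>' b mod m = (b mod m + d) mod m" "\<sigma>' b div m = \<sigma> (b div m)" for b
    using m by (simp_all add: \<sigma>'_def)
  have "inj_on \<sigma>' {..<m*P}"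
  proof (rule inj_onI)
    fix x y assume xy: "x \<in> {..<m*P}" "y \<in> {..<m*P}" "\<sigma>' x = \<sigma>' y"
    have "\<sigma>' x mod m = \<sigma>' y mod m" using xy(3) by simp
    hence "(x mod m + d) mod m = (y mod m + d) mod m" by (simp only: md)
    hence "x mod m mod m = y mod m mod m" by (rule mod_add_cancel_nat)
    hence e1: "x mod m = y mod m" by simp
    have "\<sigma>' x div m = \<sigma>' y div m" using xy(3) by simp
    hence "\<sigma> (x div m) = \<sigma> (y div m)" by (simp only: md)
    moreover have "x div m < P" "y div m < P" using xy by (auto simp: less_mult_imp_div_less mult.commute)
    ultimately have e2: "x div m = y div m" using s(1) by (auto dest: inj_onD)
    have "x = x div m * m + x mod m" by (rule div_mult_mod_eq[symmetric])
    also have "\<dots> = y div m * m + y mod m" by (simp only: e1 e2)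
    also have "\<dots> = y" by (rule div_mult_mod_eq)
    finally show "x = y" .
  qed
  moreover have "\<sigma>' ` {..<m*P} \<subseteq> {..<m*P}"
  proof
    fix y assume "y \<in> \<sigma>' ` {..<m*P}"
    then obtain b where b: "b < m*P" "y = \<sigma>' b" by auto
    have "b div m < P" using b by (auto simp: less_mult_imp_div_less mult.commute)
    hence "\<sigma> (b div m) < P" using s(2) by auto
    moreover have "(b mod m + d) mod m < m" using m by simp
    ultimately have "(b mod m + d) mod m + m * \<sigma> (b div m) < m * P" using lt by blast
    thus "y \<in> {..<m*P}" using b unfolding \<sigma>'_def by simp
  qed
  moreover have "\<sigma>' i = i'"
  proof -
    have "i mod m < m" using m by simp
    hence "i mod m + d = i' mod m + m" unfolding d_def by simp
    hence "(i mod m + d) mod m = (i' mod m + m) mod m" by simp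
    also have "\<dots> = i' mod m" by simp
    finally have "\<sigma>' i = i' mod m + m * (i' div m)" unfolding \<sigma>'_def using s(3) by simp
    thus ?thesis by simp
  qed
  moreover have "\<phi>' 0 = 1" using s(4) by (simp add: \<phi>'_def)
  moreover have "\<forall>a<m*P. \<forall>b<m*P. fourier_tensor (m#ns) a (\<sigma>' b) = fourier_tensor (m#ns) a b * \<phi>' a"
  proof (intro allI impI)
    fix a b assume ab: "a < m*P" "b < m*P"
    have a1: "a div m < P" "b div m < P" using ab by (auto simp: less_mult_imp_div_less mult.commute)
    have "fourier_tensor (m#ns) a (\<sigma>' b) = fourier m (a mod m) ((b mod m + d) mod m) * fourier_tensor ns (a div m) (\<sigma> (b div m))"
      by (simp add: ft_cons md)
    also have "\<dots> = (fourier m (a mod m) (b mod m) * om m ^ ((a mod m) * d)) * (fourier_tensor ns (a div m) (b div m) * \<phi> (a div m))"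
      using fourier_shift[OF m] s(5) a1 by simp
    also have "\<dots> = fourier_tensor (m#ns) a b * \<phi>' a" by (simp add: ft_cons \<phi>'_def)
    finally show "fourier_tensor (m#ns) a (\<sigma>' b) = fourier_tensor (m#ns) a b * \<phi>' a" .
  qed
  ultimately show ?case unfolding P_def by (intro exI[of _ \<sigma>'] exI[of _ \<phi>']) simp
qed

definition modes :: "nat \<Rightarrow> (nat \<Rightarrow> nat) \<Rightarrow> nat multiset" where
  "modes n k = image_mset k (mset_set {0..<n})"
definition Wt :: "(nat \<Rightarrow> nat \<Rightarrow> complex) \<Rightarrow> nat \<Rightarrow> (nat \<Rightarrow> nat) \<Rightarrow> complex" where
  "Wt U n k = (\<Prod>i<n. U (k i) i)"
abbreviation KK :: "nat \<Rightarrow> (nat \<Rightarrow> nat) set" where "KK n \<equiv> {0..<n} \<rightarrow>\<^sub>E {0..<n}"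
definition Amp :: "(nat \<Rightarrow> nat \<Rightarrow> complex) \<Rightarrow> nat \<Rightarrow> nat multiset \<Rightarrow> complex" where
  "Amp U n M0 = (\<Sum>k\<in>{k\<in>KK n. modes n k = M0}. Wt U n k)"
definition AmpI :: "(nat \<Rightarrow> nat \<Rightarrow> complex) \<Rightarrow> nat \<Rightarrow> nat \<Rightarrow> nat multiset \<Rightarrow> complex" where
  "AmpI U n i M0 = (\<Sum>k\<in>{k\<in>KK n. modes n k = M0 \<and> k i = 0}. Wt U n k)"
definition fM :: "'a multiset \<Rightarrow> real" where
  "fM M = (\<Prod>x\<in>set_mset M. fact (count M x))"
definition Yset :: "(nat \<Rightarrow> nat \<Rightarrow> complex) \<Rightarrow> nat \<Rightarrow> nat multiset set" where
  "Yset U n = {M0 \<in> modes n ` KK n. count M0 0 = 1 \<and> Amp U n M0 \<noteq> 0}"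
definition T0 :: "(nat \<Rightarrow> nat \<Rightarrow> complex) \<Rightarrow> nat \<Rightarrow> real" where
  "T0 U n = (\<Sum>M0\<in>Yset U n. fM M0 * (cmod (Amp U n M0))^2)"
definition Hj :: "(nat \<Rightarrow> nat \<Rightarrow> complex) \<Rightarrow> nat \<Rightarrow> (nat \<Rightarrow> nat) \<Rightarrow> real" where
  "Hj U n j = (\<Sum>M\<in>{M\<in>outcomes n j. success U n M}. out_prob U n j M)"
definition Ej :: "(nat \<Rightarrow> nat \<Rightarrow> complex) \<Rightarrow> nat \<Rightarrow> (nat \<Rightarrow> nat) \<Rightarrow> real" where
  "Ej U n j = (\<Sum>M\<in>{M\<in>outcomes n j. success U n M \<and> output_error M}. out_prob U n j M)"

lemma out_ms_img: "out_ms n j k = image_mset (\<lambda>i. (k i, j i)) (mset_set {0..<n})"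
  by (simp add: out_ms_def mset_map)

lemma fst_out_ms: "image_mset fst (out_ms n j k) = modes n k"
  by (simp add: out_ms_img modes_def image_mset.compositionality o_def)

lemma out_ms_lab: "(\<And>i. i < n \<Longrightarrow> j i = lab (k i)) \<Longrightarrow>
   out_ms n j k = image_mset (\<lambda>a. (a, lab a)) (modes n k)"
  by (auto simp: out_ms_img modes_def image_mset.compositionality o_def intro!: image_mset_cong)

lemma fst_img_lab: "image_mset fst (image_mset (\<lambda>a. (a, lab a)) M) = M"
  by (simp add: image_mset.compositionality o_def)

lemma img_lab_inj: "image_mset (\<lambda>a. (a, lab a)) M = image_mset (\<lambda>a. (a, lab a)) M' \<Longrightarrow> M = M'"
  by (metis fst_img_lab)

lemma count_modes: "count (modes n k) m = card {i\<in>{0..<n}. k i = m}"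
proof -
  have "count (modes n k) m = (\<Sum>y\<in>k -` {m} \<inter> {0..<n}. 1)"
    unfolding modes_def count_image_mset by (intro sum.cong) auto
  also have "\<dots> = card {i\<in>{0..<n}. k i = m}" by (simp add: Int_def conj_commute)
  finally show ?thesis .
qed

lemma mode_count_eq: "mode_count M m = count (image_mset fst M) m"
  unfolding mode_count_def by (induction M) auto

lemma size_modes: "size (modes n k) = n"
  by (simp add: modes_def)

lemma set_modes: "k \<in> KK n \<Longrightarrow> set_mset (modes n k) \<subseteq> {0..<n}"
  by (auto simp: modes_def)

lemma sum_count_size: "set_mset M \<subseteq> A \<Longrightarrow> finite A \<Longrightarrow> sum (count M) A = size M"
proof (induction M)
  case empty thus ?case by simp
next
  case (add x M)
  have "sum (count (add_mset x M)) A = sum (\<lambda>a. count M a + (if a = x then 1 else 0)) A"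
    by (intro sum.cong) auto
  also have "\<dots> = sum (count M) A + 1" using add.prems by (simp add: sum.distrib)
  finally show ?case using add by simp
qed

lemma sum_count_modes: "k \<in> KK n \<Longrightarrow> (\<Sum>a<n. count (modes n k) a) = n"
  using sum_count_size[of "modes n k" "{..<n}"] set_modes[of k n] size_modes[of n k]
  by (simp add: atLeast0LessThan)

lemma count_modes_out: "k \<in> KK n \<Longrightarrow> m \<ge> n \<Longrightarrow> count (modes n k) m = 0"
  using set_modes[of k n] by (meson atLeastLessThan_iff count_eq_zero_iff not_less subsetD)

lemma fock_set: assumes "k \<in> KK n"
  shows "{k'\<in>KK n. \<forall>m<n. card {i. i < n \<and> k' i = m} = count (modes n k) m} = {k'\<in>KK n. modes n k' = modes n k}"
proof (intro Collect_cong conj_cong refl)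
  fix k' assume k': "k' \<in> KK n"
  show "(\<forall>m<n. card {i. i < n \<and> k' i = m} = count (modes n k) m) = (modes n k' = modes n k)"
  proof
    assume h: "\<forall>m<n. card {i. i < n \<and> k' i = m} = count (modes n k) m"
    show "modes n k' = modes n k"
    proof (rule multiset_eqI)
      fix m show "count (modes n k') m = count (modes n k) m"
      proof (cases "m < n")
        case True thus ?thesis using h by (simp add: count_modes)
      next
        case False thus ?thesis using count_modes_out[OF assms] count_modes_out[OF k'] by simp
      qed
    qed
  next
    assume e: "modes n k' = modes n k"
    have "card {i. i < n \<and> k' i = m} = count (modes n k') m" for m by (simp add: count_modes)
    thus "\<forall>m<n. card {i. i < n \<and> k' i = m} = count (modes n k) m" using e by simp
  qed
qed

lemma herald_modes: assumes "k \<in> KK n" "image_mset fst M = modes n k" "n > 0"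
  shows "herald_pattern n M = count (modes n k)"
proof
  fix m
  have mc: "mode_count M a = count (modes n k) a" for a by (simp add: mode_count_eq assms(2))
  have sp: "(\<Sum>a<n. count (modes n k) a) = count (modes n k) 0 + (\<Sum>a\<in>{1..<n}. count (modes n k) a)"
  proof -
    have "{..<n} = insert 0 {1..<n}" using assms(3) by auto
    thus ?thesis by simp
  qed
  hence s1: "(\<Sum>a\<in>{1..<n}. count (modes n k) a) = n - count (modes n k) 0"
    using sum_count_modes[OF assms(1)] by linarith
  have s2: "(\<Sum>a\<in>{1..<n}. mode_count M a) = (\<Sum>a\<in>{1..<n}. count (modes n k) a)"
    by (simp only: mc)
  have "count (modes n k) 0 \<le> n" using sum_count_modes[OF assms(1)]
    using sp by linarith
  hence h: "n - (\<Sum>a\<in>{1..<n}. mode_count M a) = count (modes n k) 0"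
    using s1 s2 by linarith
  show "herald_pattern n M m = count (modes n k) m"
  proof (cases "m = 0")
    case True thus ?thesis using h by (simp only: herald_pattern_def simp_thms(6) if_True)
  next
    case False thus ?thesis using mc by (simp only: herald_pattern_def if_False)
  qed
qed

lemma success_iff: assumes "k \<in> KK n" "image_mset fst M = modes n k" "n > 0"
  shows "success U n M \<longleftrightarrow> count (modes n k) 0 = 1 \<and> Amp U n (modes n k) \<noteq> 0"
proof -
  have fa: "fock_amp U n (count (modes n k)) =
     complex_of_real (sqrt (\<Prod>m<n. fact (count (modes n k) m))) * Amp U n (modes n k)"
    unfolding fock_amp_def Amp_def Wt_def using fock_set[OF assms(1)] by simp
  have "sqrt (\<Prod>m<n. fact (count (modes n k) m)) \<noteq> 0"
    by (simp add: prod_pos)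
  hence "fock_amp U n (count (modes n k)) \<noteq> 0 \<longleftrightarrow> Amp U n (modes n k) \<noteq> 0" using fa by simp
  moreover have "(\<Sum>m<n. count (modes n k) m) = n" using sum_count_modes[OF assms(1)] .
  ultimately show ?thesis
    unfolding success_def herald_modes[OF assms] ideal_pattern_def by simp
qed

lemma out_prob_eq: "out_prob U n j M = fM M * (cmod (out_amp_sum U n j M))^2"
proof -
  have "0 \<le> fM M" unfolding fM_def by (simp add: prod_nonneg)
  thus ?thesis unfolding out_prob_def out_amp_def fM_def by (simp add: norm_mult power_mult_distrib)
qed

lemma count_img_inj: "inj g \<Longrightarrow> count (image_mset g M) (g x) = count M x"
proof -
  assume "inj g"
  hence "g -` {g x} \<inter> set_mset M = (if x \<in># M then {x} else {})" by (auto dest: injD)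
  thus ?thesis by (simp add: count_image_mset not_in_iff)
qed

lemma fM_img: "inj g \<Longrightarrow> fM (image_mset g M) = fM M"
proof -
  assume i: "inj g"
  have "fM (image_mset g M) = (\<Prod>x\<in>g ` set_mset M. fact (count (image_mset g M) x))"
    by (simp add: fM_def)
  also have "\<dots> = (\<Prod>x\<in>set_mset M. fact (count (image_mset g M) (g x)))"
    using prod.reindex[OF inj_on_subset[OF i subset_UNIV]] by (simp only: o_def)
  also have "\<dots> = fM M" using count_img_inj[OF i] by (simp add: fM_def)
  finally show ?thesis .
qed

lemma inj_lab: "inj (\<lambda>a. (a, lab a))"
  by (auto simp: inj_on_def)

lemma finite_Yset: "finite (Yset U n)"
  unfolding Yset_def by (rule finite_subset[of _ "modes n ` KK n"]) (auto intro: finite_PiE)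

lemma in_out_ms: "x \<in># out_ms n j k \<longleftrightarrow> (\<exists>b<n. x = (k b, j b))"
  by (auto simp: out_ms_img)

lemma amp_sum_eq: "out_amp_sum U n j M = (\<Sum>k\<in>{k\<in>KK n. out_ms n j k = M}. Wt U n k)"
  by (simp add: out_amp_sum_def Wt_def)

lemma Hj_zero: assumes "n > 0" "\<forall>i<n. j i = 0"
  shows "Hj U n j = T0 U n"
proof -
  let ?g = "image_mset (\<lambda>a. (a, (\<lambda>_. 0::nat) a))"
  have om: "out_ms n j k = ?g (modes n k)" for k by (rule out_ms_lab) (use assms(2) in auto)
  have S: "{M\<in>outcomes n j. success U n M} = ?g ` Yset U n"
  proof
    show "{M\<in>outcomes n j. success U n M} \<subseteq> ?g ` Yset U n"
    proof
      fix M assume M: "M \<in> {M\<in>outcomes n j. success U n M}"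
      then obtain k where k: "k \<in> KK n" "M = out_ms n j k" by (auto simp: outcomes_def)
      have "success U n M" using M by simp
      have fm: "image_mset fst M = modes n k" using k(2) fst_out_ms by simp
      have "count (modes n k) 0 = 1 \<and> Amp U n (modes n k) \<noteq> 0"
        using success_iff[OF k(1) fm assms(1)] \<open>success U n M\<close> by simp
      hence "modes n k \<in> Yset U n" using k(1) by (auto simp: Yset_def)
      thus "M \<in> ?g ` Yset U n" using k(2) om by auto
    qed
  next
    show "?g ` Yset U n \<subseteq> {M\<in>outcomes n j. success U n M}"
    proof
      fix M assume "M \<in> ?g ` Yset U n"
      then obtain k where k: "k \<in> KK n" "M = ?g (modes n k)" "count (modes n k) 0 = 1" "Amp U n (modes n k) \<noteq> 0"
        by (auto simp: Yset_def)
      have "M \<in> outcomes n j" using k om by (auto simp: outcomes_def)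
      have fm: "image_mset fst M = modes n k" using k(2) fst_img_lab by simp
      have "success U n M"
        using success_iff[OF k(1) fm assms(1)] k(3,4) by simp
      thus "M \<in> {M\<in>outcomes n j. success U n M}" using \<open>M \<in> outcomes n j\<close> by simp
    qed
  qed
  have "Hj U n j = (\<Sum>M\<in>?g ` Yset U n. out_prob U n j M)" unfolding Hj_def S ..
  also have "\<dots> = (\<Sum>M0\<in>Yset U n. out_prob U n j (?g M0))"
    by (rule sum.reindex_cong[where l="?g"]) (auto intro: inj_onI dest: img_lab_inj)
  also have "\<dots> = T0 U n" unfolding T0_def
  proof (intro sum.cong refl)
    fix M0 assume "M0 \<in> Yset U n"
    have fib: "{k\<in>KK n. out_ms n j k = ?g M0} = {k\<in>KK n. modes n k = M0}"
      using om by (auto dest: img_lab_inj)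
    show "out_prob U n j (?g M0) = fM M0 * (cmod (Amp U n M0))\<^sup>2"
      unfolding out_prob_eq amp_sum_eq fib Amp_def fM_img[OF inj_lab] ..
  qed
  finally show ?thesis .
qed

lemma Ej_zero: assumes "\<forall>i<n. j i = 0"
  shows "Ej U n j = 0"
proof -
  have "{M\<in>outcomes n j. success U n M \<and> output_error M} = {}"
  proof -
    have "\<not> output_error (out_ms n j k)" for k using assms by (auto simp: output_error_def in_out_ms)
    thus ?thesis by (auto simp: outcomes_def)
  qed
  thus ?thesis unfolding Ej_def by (simp only: sum.empty)
qed

lemma Ej_one: assumes n: "n > 0" and i: "i < n" and c: "c \<ge> 1" and j0: "\<forall>b<n. b \<noteq> i \<longrightarrow> j b = 0" and ji: "j i = c"
  shows "Ej U n j = (\<Sum>M0\<in>Yset U n. fM M0 * (cmod (AmpI U n i M0))^2)"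
proof -
  define lab where "lab = (\<lambda>a::nat. if a = 0 then c else 0)"
  let ?g = "image_mset (\<lambda>a. (a, lab a))"
  have bck: "out_ms n j k = ?g (modes n k)" if "k \<in> KK n" "count (modes n k) 0 = 1" "k i = 0" for k
  proof (rule out_ms_lab)
    note k = that
    have c1: "card {b\<in>{0..<n}. k b = 0} = 1" using k(2) by (simp only: count_modes)
    have c2: "i \<in> {b\<in>{0..<n}. k b = 0}" using i k(3) by simp
    obtain x where x: "{b\<in>{0..<n}. k b = 0} = {x}" using card_1_singletonE[OF c1] by blast
    have "i = x" using c2 unfolding x by simp
    hence z: "{b\<in>{0..<n}. k b = 0} = {i}" using x by simp
    fix b assume b: "b < n"
    show "j b = lab (k b)"
    proof (cases "b = i")
      case True thus ?thesis using ji k(3) by (simp add: lab_def)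
    next
      case False
      have "b \<in> {b\<in>{0..<n}. k b = 0} \<longleftrightarrow> b \<in> {i}" by (simp only: z)
      hence "k b \<noteq> 0" using b False by simp
      thus ?thesis using j0 b False by (simp add: lab_def)
    qed
  qed
  have fib: "{k\<in>KK n. out_ms n j k = ?g M0} = {k\<in>KK n. modes n k = M0 \<and> k i = 0}" if M0: "count M0 0 = 1" for M0
  proof (intro Collect_cong conj_cong refl iffI)
    fix k assume k: "k \<in> KK n" and e: "out_ms n j k = ?g M0"
    have "modes n k = M0" using arg_cong[OF e, of "image_mset fst"] by (simp add: fst_out_ms fst_img_lab)
    moreover have "0 \<in># M0" using M0 count_greater_zero_iff[of M0 0] by simp
    hence "(0, c) \<in># ?g M0" by (force simp: lab_def)
    hence "(0, c) \<in># out_ms n j k" using e by simp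
    then obtain b where "b < n" "k b = 0" "j b = c" by (auto simp: in_out_ms)
    hence "b = i" using j0 c by (cases "b = i") auto
    ultimately show "modes n k = M0 \<and> k i = 0" using \<open>k b = 0\<close> by simp
  next
    fix k assume k: "k \<in> KK n" and e: "modes n k = M0 \<and> k i = 0"
    thus "out_ms n j k = ?g M0" using bck[OF k] M0 by simp
  qed
  define S where "S = {M\<in>outcomes n j. success U n M \<and> output_error M}"
  have inS: "?g M0 \<in> S" if hyp: "M0 \<in> Yset U n" "?g M0 \<in> outcomes n j" for M0
  proof -
    note that = hyp
    obtain k where k: "k \<in> KK n" "M0 = modes n k" using hyp(1) unfolding Yset_def by blast
    have "success U n (?g M0)" using success_iff[OF k(1) _ n, of "?g M0"] k that(1) fst_img_lab
      by (auto simp: Yset_def)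
    moreover have "0 \<in># M0" using hyp(1) count_greater_zero_iff[of M0 0] by (simp add: Yset_def)
    hence "(0, c) \<in># ?g M0" by (force simp: lab_def)
    hence "output_error (?g M0)" using c by (auto simp: output_error_def)
    ultimately show ?thesis using that(2) by (simp add: S_def)
  qed
  have sub: "S \<subseteq> ?g ` Yset U n"
  proof
    fix M assume "M \<in> S"
    then obtain k where k: "k \<in> KK n" "M = out_ms n j k" "success U n M" "output_error M"
      by (auto simp: S_def outcomes_def)
    obtain c' where "c' \<ge> 1" "(0, c') \<in># M" using k(4) by (auto simp: output_error_def)
    then obtain b where "b < n" "k b = 0" "j b = c'" using k(2) by (auto simp: in_out_ms)
    hence "b = i" using j0 \<open>c' \<ge> 1\<close> by (cases "b = i") auto
    hence ki: "k i = 0" using \<open>k b = 0\<close> by simp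
    have "count (modes n k) 0 = 1 \<and> Amp U n (modes n k) \<noteq> 0"
      using success_iff[OF k(1) _ n] k(2,3) fst_out_ms by metis
    hence "modes n k \<in> Yset U n" using k(1) by (auto simp: Yset_def)
    moreover have "M = ?g (modes n k)" using bck[OF k(1) _ ki] k(2) \<open>count (modes n k) 0 = 1 \<and> _\<close> by simp
    ultimately show "M \<in> ?g ` Yset U n" by simp
  qed
  have "Ej U n j = (\<Sum>M\<in>S. out_prob U n j M)" by (simp add: Ej_def S_def)
  also have "\<dots> = (\<Sum>M\<in>?g ` Yset U n. out_prob U n j M)"
  proof (rule sum.mono_neutral_left)
    show "finite (?g ` Yset U n)" using finite_Yset by simp
    show "S \<subseteq> ?g ` Yset U n" by (rule sub)
    show "\<forall>M\<in>?g ` Yset U n - S. out_prob U n j M = 0"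
    proof
      fix M assume "M \<in> ?g ` Yset U n - S"
      then obtain M0 where M0: "M0 \<in> Yset U n" "M = ?g M0" "?g M0 \<notin> S" by auto
      hence "?g M0 \<notin> outcomes n j" using inS by blast
      hence e: "{k\<in>KK n. out_ms n j k = ?g M0} = {}" unfolding outcomes_def by (auto simp del: PiE_iff) (metis imageI)
      show "out_prob U n j M = 0" unfolding M0(2) out_prob_eq amp_sum_eq e by simp
    qed
  qed
  also have "\<dots> = (\<Sum>M0\<in>Yset U n. out_prob U n j (?g M0))"
    by (rule sum.reindex_cong[where l="?g"]) (auto intro: inj_onI dest: img_lab_inj)
  also have "\<dots> = (\<Sum>M0\<in>Yset U n. fM M0 * (cmod (AmpI U n i M0))^2)"
  proof (intro sum.cong refl)
    fix M0 assume "M0 \<in> Yset U n"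
    hence "count M0 0 = 1" by (simp add: Yset_def)
    show "out_prob U n j (?g M0) = fM M0 * (cmod (AmpI U n i M0))\<^sup>2"
      unfolding out_prob_eq amp_sum_eq fib[OF \<open>count M0 0 = 1\<close>] AmpI_def fM_img[OF inj_lab] ..
  qed
  finally show ?thesis .
qed

lemma Amp_split: assumes "M0 \<in> modes n ` KK n" "count M0 0 = 1"
  shows "Amp U n M0 = (\<Sum>i<n. AmpI U n i M0)"
proof -
  define F where "F = {k\<in>KK n. modes n k = M0}"
  have fin: "finite F" unfolding F_def by (rule finite_subset[of _ "KK n"]) (auto intro: finite_PiE)
  have A: "AmpI U n i M0 = (\<Sum>k\<in>F. if k i = 0 then Wt U n k else 0)" for i
  proof -
    have "{k\<in>KK n. modes n k = M0 \<and> k i = 0} = {k\<in>F. k i = 0}" by (auto simp: F_def)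
    thus ?thesis unfolding AmpI_def using sum.inter_filter[OF fin] by simp
  qed
  have "(\<Sum>i<n. AmpI U n i M0) = (\<Sum>k\<in>F. \<Sum>i<n. if k i = 0 then Wt U n k else 0)"
    unfolding A by (rule sum.swap)
  also have "\<dots> = (\<Sum>k\<in>F. Wt U n k)"
  proof (rule sum.cong[OF refl])
    fix k assume k: "k \<in> F"
    have "(\<Sum>i<n. if k i = 0 then Wt U n k else 0) = (\<Sum>i\<in>{i\<in>{..<n}. k i = 0}. Wt U n k)"
      by (rule sum.inter_filter[symmetric]) simp
    also have "\<dots> = of_nat (card {i\<in>{..<n}. k i = 0}) * Wt U n k" by (rule sum_constant)
    also have "card {i\<in>{..<n}. k i = 0} = count (modes n k) 0" by (simp add: count_modes atLeast0LessThan)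
    also have "\<dots> = 1" using k assms(2) by (simp add: F_def)
    finally show "(\<Sum>i<n. if k i = 0 then Wt U n k else 0) = Wt U n k" by simp
  qed
  finally show ?thesis by (simp add: Amp_def F_def)
qed

lemma modes_perm: assumes "bij_betw \<sigma> {..<n} {..<n}"
  shows "modes n (restrict (\<lambda>b. k (\<sigma> b)) {0..<n}) = modes n k"
proof -
  have "modes n (restrict (\<lambda>b. k (\<sigma> b)) {0..<n}) = image_mset (\<lambda>b. k (\<sigma> b)) (mset_set {..<n})"
    unfolding modes_def atLeast0LessThan by (intro image_mset_cong) auto
  also have "\<dots> = image_mset k (image_mset \<sigma> (mset_set {..<n}))" by (simp add: image_mset.compositionality o_def)
  also have "image_mset \<sigma> (mset_set {..<n}) = mset_set (\<sigma> ` {..<n})"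
    using assms by (simp add: image_mset_mset_set bij_betw_def)
  also have "\<sigma> ` {..<n} = {..<n}" using assms by (simp add: bij_betw_def)
  finally have X: "modes n (restrict (\<lambda>b. k (\<sigma> b)) {0..<n}) = image_mset k (mset_set {..<n})" .
  have Y: "modes n k = image_mset k (mset_set {..<n})" by (simp add: modes_def atLeast0LessThan)
  from X Y show ?thesis by (rule trans[OF _ sym])
qed

lemma Wt_perm: assumes bij: "bij_betw \<sigma> {..<n} {..<n}" and sym: "\<forall>a<n. \<forall>b<n. U a (\<sigma> b) = U a b * \<phi> a"
  and k: "k \<in> KK n"
  shows "Wt U n k = Wt U n (restrict (\<lambda>b. k (\<sigma> b)) {0..<n}) * prod_mset (image_mset \<phi> (modes n k))"
proof -
  have kb: "k b < n" if "b < n" for b using k that by auto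
  have sb: "\<sigma> b < n" if "b < n" for b using bij that by (auto simp: bij_betw_def)
  have "Wt U n k = (\<Prod>b<n. U (k (\<sigma> b)) (\<sigma> b))"
    unfolding Wt_def using prod.reindex_bij_betw[OF bij, of "\<lambda>b. U (k b) b"] by simp
  also have "\<dots> = (\<Prod>b<n. U (k (\<sigma> b)) b * \<phi> (k (\<sigma> b)))"
    using sym kb sb by (intro prod.cong refl) auto
  also have "\<dots> = (\<Prod>b<n. U (k (\<sigma> b)) b) * (\<Prod>b<n. \<phi> (k (\<sigma> b)))" by (rule prod.distrib)
  also have "(\<Prod>b<n. \<phi> (k (\<sigma> b))) = (\<Prod>b<n. \<phi> (k b))"
    using prod.reindex_bij_betw[OF bij, of "\<lambda>b. \<phi> (k b)"] by simp
  also have "\<dots> = prod_mset (image_mset \<phi> (modes n k))"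
    by (simp add: prod_unfold_prod_mset modes_def image_mset.compositionality o_def atLeast0LessThan)
  also have "(\<Prod>b<n. U (k (\<sigma> b)) b) = Wt U n (restrict (\<lambda>b. k (\<sigma> b)) {0..<n})"
    unfolding Wt_def by (intro prod.cong refl) auto
  finally show ?thesis .
qed

lemma AmpI_sym:
  assumes bij: "bij_betw \<sigma> {..<n} {..<n}" and si: "\<sigma> i' = i" and i: "i < n" "i' < n"
    and sym: "\<forall>a<n. \<forall>b<n. U a (\<sigma> b) = U a b * \<phi> a"
    and A: "Amp U n M0 \<noteq> 0"
  shows "AmpI U n i M0 = AmpI U n i' M0"
proof -
  define \<tau> where "\<tau> = inv_into {..<n} \<sigma>"
  have bt: "bij_betw \<tau> {..<n} {..<n}" unfolding \<tau>_def by (rule bij_betw_inv_into[OF bij])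
  have st: "\<sigma> (\<tau> b) = b" if "b < n" for b
    unfolding \<tau>_def using bij that by (simp add: bij_betw_inv_into_right)
  have ts: "\<tau> (\<sigma> b) = b" if "b < n" for b
    unfolding \<tau>_def using bij that by (simp add: bij_betw_inv_into_left)
  have ti: "\<tau> i = i'" using ts[OF i(2)] si by simp
  have sb: "\<sigma> b < n" if "b < n" for b using bij that by (auto simp: bij_betw_def)
  have tb: "\<tau> b < n" if "b < n" for b using bt that by (auto simp: bij_betw_def)
  define T where "T = (\<lambda>k::nat\<Rightarrow>nat. restrict (\<lambda>b. k (\<sigma> b)) {0..<n})"
  define T' where "T' = (\<lambda>k::nat\<Rightarrow>nat. restrict (\<lambda>b. k (\<tau> b)) {0..<n})"
  have TK: "T k \<in> KK n" if "k \<in> KK n" for k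
  proof (unfold T_def restrict_PiE_iff, intro ballI)
    fix b assume "b \<in> {0..<n}"
    hence "\<sigma> b \<in> {0..<n}" using sb by simp
    thus "k (\<sigma> b) \<in> {0..<n}" using PiE_mem[OF that] by blast
  qed
  have T'K: "T' k \<in> KK n" if "k \<in> KK n" for k
  proof (unfold T'_def restrict_PiE_iff, intro ballI)
    fix b assume "b \<in> {0..<n}"
    hence "\<tau> b \<in> {0..<n}" using tb by simp
    thus "k (\<tau> b) \<in> {0..<n}" using PiE_mem[OF that] by blast
  qed
  have TT': "T' (T k) = k" if "k \<in> KK n" for k
  proof
    fix b show "T' (T k) b = k b"
    proof (cases "b < n")
      case True
      hence tb': "\<tau> b < n" by (rule tb)
      have "T' (T k) b = T k (\<tau> b)" by (simp add: T'_def True)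
      also have "\<dots> = k (\<sigma> (\<tau> b))" by (simp add: T_def tb')
      also have "\<dots> = k b" by (simp add: st True)
      finally show ?thesis .
    next
      case False
      have "T' (T k) b = undefined" by (simp add: T'_def False)
      also have "\<dots> = k b" using PiE_arb[OF that, of b] False by simp
      finally show ?thesis .
    qed
  qed
  have T'T: "T (T' k) = k" if "k \<in> KK n" for k
  proof
    fix b show "T (T' k) b = k b"
    proof (cases "b < n")
      case True
      hence sb': "\<sigma> b < n" by (rule sb)
      have "T (T' k) b = T' k (\<sigma> b)" by (simp add: T_def True)
      also have "\<dots> = k (\<tau> (\<sigma> b))" by (simp add: T'_def sb')
      also have "\<dots> = k b" by (simp add: ts True)
      finally show ?thesis .
    next
      case False
      have "T (T' k) b = undefined" by (simp add: T_def False)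
      also have "\<dots> = k b" using PiE_arb[OF that, of b] False by simp
      finally show ?thesis .
    qed
  qed
  have mT: "modes n (T k) = modes n k" for k unfolding T_def by (rule modes_perm[OF bij])
  have mT': "modes n (T' k) = modes n k" for k unfolding T'_def by (rule modes_perm[OF bt])
  have Ti: "T k i' = k i" for k using i si by (simp add: T_def)
  have T'i: "T' k i = k i'" for k using i ti by (simp add: T'_def)
  define c where "c = prod_mset (image_mset \<phi> M0)"
  have W: "Wt U n k = Wt U n (T k) * c" if "k \<in> KK n" "modes n k = M0" for k
    using Wt_perm[OF bij sym that(1)] that(2) by (simp add: T_def c_def)
  have "Amp U n M0 = (\<Sum>k\<in>{k\<in>KK n. modes n k = M0}. Wt U n (T k) * c)"
    unfolding Amp_def using W by (intro sum.cong) auto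
  also have "\<dots> = (\<Sum>k\<in>{k\<in>KK n. modes n k = M0}. Wt U n (T k)) * c" by (simp add: sum_distrib_right)
  also have "(\<Sum>k\<in>{k\<in>KK n. modes n k = M0}. Wt U n (T k)) = (\<Sum>k\<in>{k\<in>KK n. modes n k = M0}. Wt U n k)"
    by (rule sum.reindex_bij_witness[where j=T and i=T']) (auto simp: TT' T'T TK T'K mT mT')
  finally have "Amp U n M0 = Amp U n M0 * c" by (simp add: Amp_def)
  hence c1: "c = 1" using A by simp
  have "AmpI U n i M0 = (\<Sum>k\<in>{k\<in>KK n. modes n k = M0 \<and> k i = 0}. Wt U n (T k) * c)"
    unfolding AmpI_def using W by (intro sum.cong) auto
  also have "\<dots> = (\<Sum>k\<in>{k\<in>KK n. modes n k = M0 \<and> k i = 0}. Wt U n (T k))" by (simp add: c1)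
  also have "\<dots> = (\<Sum>k\<in>{k\<in>KK n. modes n k = M0 \<and> k i' = 0}. Wt U n k)"
    by (rule sum.reindex_bij_witness[where j=T and i=T']) (auto simp: TT' T'T TK T'K mT mT' Ti T'i)
  finally show ?thesis by (simp add: AmpI_def)
qed

lemma key_sum:
  assumes hs: "\<forall>i<n. \<forall>i'<n. \<exists>\<sigma> \<phi>. bij_betw \<sigma> {..<n} {..<n} \<and> \<sigma> i' = i \<and> (\<forall>a<n. \<forall>b<n. U a (\<sigma> b) = U a b * \<phi> a)"
    and M0: "M0 \<in> Yset U n" and n: "n > 0"
  shows "(\<Sum>i<n. (cmod (AmpI U n i M0))^2) = (cmod (Amp U n M0))^2 / n"
proof -
  have M: "M0 \<in> modes n ` KK n" "count M0 0 = 1" "Amp U n M0 \<noteq> 0" using M0 by (auto simp: Yset_def)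
  have eq: "AmpI U n i M0 = AmpI U n 0 M0" if ilt: "i < n" for i
  proof -
    obtain \<sigma> \<phi> where s: "bij_betw \<sigma> {..<n} {..<n}" "\<sigma> 0 = i" "\<forall>a<n. \<forall>b<n. U a (\<sigma> b) = U a b * \<phi> a"
      using hs[rule_format, OF ilt n] by blast
    show ?thesis by (rule AmpI_sym[OF s(1) s(2) ilt n s(3) M(3)])
  qed
  have "(\<Sum>i<n. AmpI U n i M0) = (\<Sum>i<n. AmpI U n 0 M0)"
    by (rule sum.cong[OF refl], rule eq, simp)
  hence "Amp U n M0 = (\<Sum>i<n. AmpI U n 0 M0)" using Amp_split[OF M(1,2)] by simp
  hence a: "Amp U n M0 = of_nat n * AmpI U n 0 M0" by simp
  have "(\<Sum>i<n. (cmod (AmpI U n i M0))^2) = (\<Sum>i<n. (cmod (AmpI U n 0 M0))^2)"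
    by (rule sum.cong[OF refl], subst eq, simp_all)
  hence "(\<Sum>i<n. (cmod (AmpI U n i M0))^2) = of_nat n * (cmod (AmpI U n 0 M0))^2" by simp
  also have "\<dots> = (cmod (Amp U n M0))^2 / n" using n unfolding a by (simp add: norm_mult power_mult_distrib power2_eq_square)
  finally show ?thesis .
qed

lemma pos_sum:
  fixes U :: "nat \<Rightarrow> nat \<Rightarrow> complex"
  assumes n3: "n \<ge> 3" and row0: "\<forall>b<n. U 0 b = v"
    and col: "\<forall>b<n. (\<Sum>a<n. U a b) = (if b = 0 then s else 0)"
    and v0: "v \<noteq> 0" and s: "s = of_nat n * v"
  shows "(\<Sum>i<n. \<Prod>b<n. \<Sum>a\<in>(if b = i then {0} else {1..<n}). U a b) \<noteq> 0"
proof -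
  define t where "t b = (\<Sum>a\<in>{1..<n}. U a b)" for b
  have tb: "t b = (if b = 0 then s else 0) - v" if "b < n" for b
  proof -
    have "{..<n} = insert 0 {1..<n}" using n3 by auto
    hence "(\<Sum>a<n. U a b) = U 0 b + t b" by (simp add: t_def)
    thus ?thesis using col row0 that by auto
  qed
  define m where "m = n - 2"
  have m: "n = Suc (Suc m)" using n3 unfolding m_def by simp
  define X where "X i = (\<Prod>b<n. \<Sum>a\<in>(if b = i then {0} else {1..<n}). U a b)" for i
  have X1: "X i = v * (\<Prod>b\<in>{..<n}-{i}. t b)" if "i < n" for i
  proof -
    have "X i = (\<Sum>a\<in>{0}. U a i) * (\<Prod>b\<in>{..<n}-{i}. \<Sum>a\<in>(if b = i then {0} else {1..<n}). U a b)"
      unfolding X_def using that by (subst prod.remove[of _ i]) auto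
    also have "(\<Prod>b\<in>{..<n}-{i}. \<Sum>a\<in>(if b = i then {0} else {1..<n}). U a b) = (\<Prod>b\<in>{..<n}-{i}. t b)"
      by (intro prod.cong refl) (auto simp: t_def)
    finally show ?thesis using row0 that by simp
  qed
  have X0: "X 0 = v * (- v) ^ (Suc m)"
  proof -
    have "(\<Prod>b\<in>{..<n}-{0}. t b) = (\<Prod>b\<in>{..<n}-{0}. - v)" using tb by (intro prod.cong refl) auto
    also have "\<dots> = (- v) ^ (Suc m)" using m by simp
    finally show ?thesis using X1[of 0] m by simp
  qed
  have Xi: "X i = v * ((s - v) * (- v) ^ m)" if "i < n" "i \<noteq> 0" for i
  proof -
    have "(\<Prod>b\<in>{..<n}-{i}. t b) = t 0 * (\<Prod>b\<in>{..<n}-{i}-{0}. t b)"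
      using that m by (subst prod.remove[of _ 0]) auto
    also have "(\<Prod>b\<in>{..<n}-{i}-{0}. t b) = (\<Prod>b\<in>{..<n}-{i}-{0}. - v)" using tb by (intro prod.cong refl) auto
    also have "\<dots> = (- v) ^ m"
    proof -
      have "card ({..<n}-{i}-{0}) = m" using that m by (simp add: card_Diff_singleton_if)
      thus ?thesis by simp
    qed
    also have "t 0 = s - v" using tb[of 0] m by simp
    finally show ?thesis using X1[OF that(1)] by simp
  qed
  have "(\<Sum>i<n. X i) = X 0 + (\<Sum>i\<in>{..<n}-{0}. X i)"
    using m by (subst sum.remove[of _ 0]) auto
  also have "(\<Sum>i\<in>{..<n}-{0}. X i) = (\<Sum>i\<in>{..<n}-{0}. v * ((s - v) * (- v) ^ m))"
    using Xi by (intro sum.cong refl) auto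
  also have "\<dots> = of_nat (Suc m) * (v * ((s - v) * (- v) ^ m))" using m by simp
  finally have "(\<Sum>i<n. X i) = v * (- v) ^ Suc m + of_nat (Suc m) * (v * ((s - v) * (- v) ^ m))"
    using X0 by simp
  also have "\<dots> = v * v * (- v) ^ m * (of_nat (Suc m) * of_nat (Suc m) - 1)"
    using s m by (simp add: algebra_simps)
  also have "\<dots> \<noteq> 0"
  proof -
    have "(of_nat (Suc m) * of_nat (Suc m) - 1 :: complex) = of_nat (m * (m + 2))"
      by (simp add: algebra_simps)
    moreover have "m * (m + 2) \<noteq> 0" using m n3 by simp
    ultimately have "(of_nat (Suc m) * of_nat (Suc m) - 1 :: complex) \<noteq> 0" by (metis of_nat_eq_0_iff)
    thus ?thesis using v0 by simp
  qed
  finally show ?thesis unfolding X_def .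
qed

lemma Yset_nonempty:
  assumes n3: "n \<ge> 3"
    and nz: "(\<Sum>i<n. \<Prod>b<n. \<Sum>a\<in>(if b = i then {0} else {1..<n}). U a b) \<noteq> 0"
  shows "Yset U n \<noteq> {}"
proof
  assume Y: "Yset U n = {}"
  define B where "B i b = (if b = i then {0} else {1..<n::nat})" for i b :: nat
  define P where "P i = PiE {0..<n} (B i)" for i
  define K1 where "K1 = {k\<in>KK n. count (modes n k) 0 = 1}"
  have finK: "finite (KK n)" by (rule finite_PiE) auto
  have PW: "(\<Sum>k\<in>P i. Wt U n k) = (\<Prod>b<n. \<Sum>a\<in>B i b. U a b)" for i
  proof -
    have "(\<Prod>b\<in>{0..<n}. \<Sum>a\<in>B i b. U a b) = (\<Sum>g\<in>PiE {0..<n} (B i). \<Prod>x\<in>{0..<n}. U (g x) x)"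
      by (rule prod_sum_PiE) (auto simp: B_def)
    thus ?thesis unfolding P_def Wt_def by (simp add: atLeast0LessThan)
  qed
  have K1eq: "K1 = (\<Union>i\<in>{..<n}. P i)"
  proof
    show "K1 \<subseteq> (\<Union>i\<in>{..<n}. P i)"
    proof
      fix k assume "k \<in> K1"
      hence k: "k \<in> KK n" "count (modes n k) 0 = 1" by (auto simp: K1_def)
      have "card {b\<in>{0..<n}. k b = 0} = 1" using k(2) by (simp only: count_modes)
      then obtain i where i: "{b\<in>{0..<n}. k b = 0} = {i}" by (rule card_1_singletonE)
      have "i \<in> {b\<in>{0..<n}. k b = 0}" unfolding i by simp
      hence il: "i < n" "k i = 0" by auto
      have "k \<in> P i" unfolding P_def PiE_iff
      proof (intro conjI ballI)
        fix b assume b: "b \<in> {0..<n}"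
        have kb: "k b < n" using PiE_mem[OF k(1) b] by simp
        show "k b \<in> B i b"
        proof (cases "b = i")
          case True thus ?thesis using il by (simp add: B_def)
        next
          case False
          have "b \<in> {b\<in>{0..<n}. k b = 0} \<longleftrightarrow> b \<in> {i}" by (simp only: i)
          hence "k b \<noteq> 0" using b False by simp
          thus ?thesis using False kb by (simp add: B_def)
        qed
      next
        show "k \<in> extensional {0..<n}" using k(1) by (simp add: PiE_iff)
      qed
      thus "k \<in> (\<Union>i\<in>{..<n}. P i)" using il by blast
    qed
  next
    show "(\<Union>i\<in>{..<n}. P i) \<subseteq> K1"
    proof
      fix k assume "k \<in> (\<Union>i\<in>{..<n}. P i)"
      then obtain i where il: "i < n" and kP: "k \<in> P i" by blast
      have kB: "k b \<in> B i b" if "b < n" for b using kP that by (auto simp: P_def PiE_iff)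
      have kK: "k \<in> KK n" unfolding PiE_iff
      proof (intro conjI ballI)
        fix b assume b: "b \<in> {0..<n}"
        show "k b \<in> {0..<n}" using kB[of b] b il by (cases "b = i") (auto simp: B_def)
      next
        show "k \<in> extensional {0..<n}" using kP by (simp add: P_def PiE_iff)
      qed
      have "{b\<in>{0..<n}. k b = 0} = {i}"
      proof (intro set_eqI iffI)
        fix b assume "b \<in> {b\<in>{0..<n}. k b = 0}"
        hence b: "b < n" "k b = 0" by auto
        show "b \<in> {i}"
        proof (rule ccontr)
          assume "b \<notin> {i}"
          hence "k b \<in> {1..<n}" using kB[OF b(1)] by (simp add: B_def)
          thus False using b(2) by simp
        qed
      next
        fix b assume "b \<in> {i}"
        hence "b = i" by simp
        thus "b \<in> {b\<in>{0..<n}. k b = 0}" using kB[OF il] il by (simp add: B_def)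
      qed
      hence "count (modes n k) 0 = 1" by (simp add: count_modes)
      thus "k \<in> K1" using kK by (simp add: K1_def)
    qed
  qed
  have "(\<Sum>k\<in>K1. Wt U n k) = (\<Sum>i<n. \<Sum>k\<in>P i. Wt U n k)"
    unfolding K1eq
  proof (rule sum.UNION_disjoint)
    show "finite {..<n}" by simp
    show "\<forall>i\<in>{..<n}. finite (P i)" by (auto simp: P_def B_def intro!: finite_PiE)
    show "\<forall>i\<in>{..<n}. \<forall>j\<in>{..<n}. i \<noteq> j \<longrightarrow> P i \<inter> P j = {}"
    proof (intro ballI impI)
      fix i j assume ij: "i \<in> {..<n}" "j \<in> {..<n}" "i \<noteq> j"
      show "P i \<inter> P j = {}"
      proof (rule ccontr)
        assume "P i \<inter> P j \<noteq> {}"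
        then obtain k where "k \<in> P i" "k \<in> P j" by blast
        hence "k i \<in> B i i" "k i \<in> B j i" using ij by (auto simp: P_def PiE_iff)
        thus False using ij(3) by (simp add: B_def)
      qed
    qed
  qed
  also have "\<dots> \<noteq> 0" using nz by (simp add: PW B_def)
  finally have nz1: "(\<Sum>k\<in>K1. Wt U n k) \<noteq> 0" .
  have finK1: "finite K1" unfolding K1_def using finK by simp
  have "(\<Sum>k\<in>K1. Wt U n k) = (\<Sum>M0\<in>modes n ` K1. \<Sum>k\<in>{k\<in>K1. modes n k = M0}. Wt U n k)"
    by (rule sum.image_gen[OF finK1])
  also have "\<dots> = 0"
  proof (rule sum.neutral, rule ballI)
    fix M0 assume "M0 \<in> modes n ` K1"
    then obtain k0 where k0: "k0 \<in> K1" "M0 = modes n k0" by blast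
    have c: "count M0 0 = 1" using k0 by (simp add: K1_def)
    have "{k\<in>K1. modes n k = M0} = {k\<in>KK n. modes n k = M0}" using c by (auto simp: K1_def)
    hence "(\<Sum>k\<in>{k\<in>K1. modes n k = M0}. Wt U n k) = Amp U n M0" by (simp add: Amp_def)
    moreover have "M0 \<in> modes n ` KK n" using k0 by (auto simp: K1_def)
    hence "Amp U n M0 = 0" using Y c by (auto simp: Yset_def)
    ultimately show "(\<Sum>k\<in>{k\<in>K1. modes n k = M0}. Wt U n k) = 0" by simp
  qed
  finally show False using nz1 by simp
qed

lemma T0_pos: assumes "Yset U n \<noteq> {}" shows "T0 U n > 0"
  unfolding T0_def
proof (rule sum_pos[OF finite_Yset assms])
  fix M0 assume "M0 \<in> Yset U n"
  hence "Amp U n M0 \<noteq> 0" by (simp add: Yset_def)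
  moreover have "fM M0 > 0" unfolding fM_def by (rule prod_pos) simp
  ultimately show "0 < fM M0 * (cmod (Amp U n M0))\<^sup>2" by simp
qed

definition Pe :: "nat \<Rightarrow> real \<Rightarrow> real \<Rightarrow> (nat \<Rightarrow> nat) \<Rightarrow> real" where
  "Pe n w \<epsilon> j = (\<Prod>i<n. if j i = 0 then 1 - \<epsilon> else \<epsilon> * w)"

definition nbad :: "nat \<Rightarrow> (nat \<Rightarrow> nat) \<Rightarrow> nat" where
  "nbad n j = card {i\<in>{..<n}. j i \<noteq> 0}"

lemma Pe_form: "Pe n w \<epsilon> j = (\<epsilon> * w) ^ nbad n j * (1 - \<epsilon>) ^ (n - nbad n j)"
proof -
  have "Pe n w \<epsilon> j = (\<Prod>i\<in>{..<n} \<inter> {i. j i = 0}. 1 - \<epsilon>) * (\<Prod>i\<in>{..<n} \<inter> - {i. j i = 0}. \<epsilon> * w)"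
    unfolding Pe_def by (rule prod.If_cases) simp
  also have "{..<n} \<inter> - {i. j i = 0} = {i\<in>{..<n}. j i \<noteq> 0}" by auto
  also have "{..<n} \<inter> {i. j i = 0} = {..<n} - {i\<in>{..<n}. j i \<noteq> 0}" by auto
  finally have e: "Pe n w \<epsilon> j = (1 - \<epsilon>) ^ card ({..<n} - {i\<in>{..<n}. j i \<noteq> 0}) * (\<epsilon> * w) ^ card {i\<in>{..<n}. j i \<noteq> 0}"
    by (simp only: prod_constant)
  have c: "card ({..<n} - {i\<in>{..<n}. j i \<noteq> 0}) = n - nbad n j"
    unfolding nbad_def by (subst card_Diff_subset) auto
  show ?thesis unfolding e c nbad_def by (simp only: mult.commute)
qed

lemma nbad0: "nbad n j = 0 \<longleftrightarrow> (\<forall>i<n. j i = 0)"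
  by (auto simp: nbad_def)

lemma Pe_le: assumes "0 < \<epsilon>" "\<epsilon> < 1" "0 < w" "w \<le> 1" "nbad n j \<ge> k"
  shows "Pe n w \<epsilon> j \<le> \<epsilon> ^ k" "0 \<le> Pe n w \<epsilon> j"
proof -
  have x0: "0 \<le> \<epsilon> * w" "\<epsilon> * w \<le> \<epsilon>" using assms by (auto intro: mult_left_le)
  have y: "0 \<le> 1 - \<epsilon>" "1 - \<epsilon> \<le> 1" using assms by auto
  have x1: "\<epsilon> * w \<le> 1" using x0 assms by linarith
  have "(1 - \<epsilon>) ^ (n - nbad n j) \<le> 1" using y by (rule power_le_one)
  moreover have "(\<epsilon> * w) ^ nbad n j \<le> (\<epsilon> * w) ^ k"
    using x0 x1 assms by (intro power_decreasing) auto
  moreover have "(\<epsilon> * w) ^ k \<le> \<epsilon> ^ k" using x0 by (intro power_mono) auto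
  ultimately have "(\<epsilon> * w) ^ nbad n j * (1 - \<epsilon>) ^ (n - nbad n j) \<le> \<epsilon> ^ k * 1"
    using x0 y by (intro mult_mono) auto
  thus "Pe n w \<epsilon> j \<le> \<epsilon> ^ k" by (simp add: Pe_form)
  show "0 \<le> Pe n w \<epsilon> j" using x0 y by (simp add: Pe_form)
qed

lemma one_minus_pow: assumes "0 \<le> \<epsilon>" "\<epsilon> \<le> 1"
  shows "0 \<le> 1 - (1 - \<epsilon>) ^ m" "1 - (1 - \<epsilon>) ^ m \<le> real m * \<epsilon>"
proof -
  show "0 \<le> 1 - (1 - \<epsilon>) ^ m" using assms by (simp add: power_le_one)
  have "1 + real m * (- \<epsilon>) \<le> (1 + (- \<epsilon>)) ^ m" using assms by (intro Bernoulli_inequality) simp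
  thus "1 - (1 - \<epsilon>) ^ m \<le> real m * \<epsilon>" by simp
qed

lemma asym:
  fixes E H :: "(nat \<Rightarrow> nat) \<Rightarrow> real"
  assumes fin: "finite J" and n: "n > 0"
    and j0: "j0 \<in> J" and uniq: "\<forall>j\<in>J. (\<forall>i<n. j i = 0) \<longrightarrow> j = j0" and j0z: "\<forall>i<n. j0 i = 0"
    and H0: "H j0 = T" and Tpos: "T > 0" and E0: "E j0 = 0"
    and w: "0 < w" "w \<le> 1"
    and S1: "(\<Sum>j\<in>{j\<in>J. nbad n j = 1}. E j) * w = T / n"
  shows "(\<lambda>\<epsilon>. (\<Sum>j\<in>J. Pe n w \<epsilon> j * E j) / (\<Sum>j\<in>J. Pe n w \<epsilon> j * H j) - \<epsilon> / n) \<in> O[at_right 0](\<lambda>\<epsilon>. \<epsilon>\<^sup>2)"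
proof -
  define SH where "SH = (\<Sum>j\<in>J. \<bar>H j\<bar>)"
  define SE where "SE = (\<Sum>j\<in>J. \<bar>E j\<bar>)"
  define C0 where "C0 = T + SE + real n * T + SH"
  define \<delta> where "\<delta> = min (1/2) (T / (2 * (real n * T + SH + 1)))"
  have SH0: "SH \<ge> 0" unfolding SH_def by (simp add: sum_nonneg)
  have SE0: "SE \<ge> 0" unfolding SE_def by (simp add: sum_nonneg)
  have nT: "0 \<le> real n * T" using Tpos by simp
  have d1: "0 < real n * T + SH + 1" using nT SH0 by linarith
  have d: "0 < 2 * (real n * T + SH + 1)" using d1 by simp
  have \<delta>0: "\<delta> > 0" unfolding \<delta>_def using Tpos d by simp
  have bound: "\<bar>(\<Sum>j\<in>J. Pe n w \<epsilon> j * E j) / (\<Sum>j\<in>J. Pe n w \<epsilon> j * H j) - \<epsilon> / n\<bar> \<le> (2 * C0 / T) * \<bar>\<epsilon>\<^sup>2\<bar>"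
    if e0: "0 < \<epsilon>" and e1: "\<epsilon> < \<delta>" for \<epsilon>
  proof -
    have el1: "\<epsilon> < 1" using e1 unfolding \<delta>_def by linarith
    define h where "h = (\<Sum>j\<in>J. Pe n w \<epsilon> j * H j)"
    define e where "e = (\<Sum>j\<in>J. Pe n w \<epsilon> j * E j)"
    have Pj0: "Pe n w \<epsilon> j0 = (1 - \<epsilon>) ^ n"
    proof -
      have "nbad n j0 = 0" using j0z by (simp add: nbad0)
      thus ?thesis by (simp add: Pe_form)
    qed
    have hdiff: "\<bar>h - T\<bar> \<le> \<epsilon> * (real n * T + SH)"
    proof -
      have "h = Pe n w \<epsilon> j0 * H j0 + (\<Sum>j\<in>J - {j0}. Pe n w \<epsilon> j * H j)"
        unfolding h_def using fin j0 by (simp add: sum.remove)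
      hence "h - T = ((1 - \<epsilon>) ^ n - 1) * T + (\<Sum>j\<in>J - {j0}. Pe n w \<epsilon> j * H j)"
        using Pj0 H0 by (simp add: algebra_simps)
      hence "\<bar>h - T\<bar> \<le> \<bar>((1 - \<epsilon>) ^ n - 1) * T\<bar> + \<bar>\<Sum>j\<in>J - {j0}. Pe n w \<epsilon> j * H j\<bar>" by simp
      also have "\<bar>((1 - \<epsilon>) ^ n - 1) * T\<bar> \<le> real n * \<epsilon> * T"
      proof -
        have "\<bar>((1 - \<epsilon>) ^ n - 1) * T\<bar> = (1 - (1 - \<epsilon>) ^ n) * T"
          using one_minus_pow(1)[of \<epsilon> n] e0 el1 Tpos by (simp add: abs_mult)
        also have "\<dots> \<le> real n * \<epsilon> * T" using one_minus_pow(2)[of \<epsilon> n] e0 el1 Tpos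
          by (intro mult_right_mono) auto
        finally show ?thesis .
      qed
      also have "\<bar>\<Sum>j\<in>J - {j0}. Pe n w \<epsilon> j * H j\<bar> \<le> (\<Sum>j\<in>J - {j0}. \<epsilon> * \<bar>H j\<bar>)"
      proof -
        have "\<bar>\<Sum>j\<in>J - {j0}. Pe n w \<epsilon> j * H j\<bar> \<le> (\<Sum>j\<in>J - {j0}. \<bar>Pe n w \<epsilon> j * H j\<bar>)" by (rule sum_abs)
        also have "\<dots> \<le> (\<Sum>j\<in>J - {j0}. \<epsilon> * \<bar>H j\<bar>)"
        proof (rule sum_mono)
          fix j assume j: "j \<in> J - {j0}"
          have "nbad n j \<ge> 1"
          proof (rule ccontr)
            assume "\<not> nbad n j \<ge> 1"
            hence "\<forall>i<n. j i = 0" using nbad0 by (metis less_one not_le)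
            thus False using uniq j by auto
          qed
          hence "Pe n w \<epsilon> j \<le> \<epsilon>" "0 \<le> Pe n w \<epsilon> j" using Pe_le[OF e0 el1 w] by (metis power_one_right)+
          thus "\<bar>Pe n w \<epsilon> j * H j\<bar> \<le> \<epsilon> * \<bar>H j\<bar>" by (simp add: abs_mult mult_right_mono)
        qed
        finally show ?thesis .
      qed
      also have "(\<Sum>j\<in>J - {j0}. \<epsilon> * \<bar>H j\<bar>) \<le> \<epsilon> * SH"
        unfolding SH_def sum_distrib_left[symmetric] using e0 fin
        by (intro mult_left_mono sum_mono2) auto
      finally show ?thesis by (simp add: algebra_simps)
    qed
    have "\<epsilon> * (real n * T + SH) \<le> T / 2"
    proof -
      have "\<epsilon> \<le> T / (2 * (real n * T + SH + 1))" using e1 unfolding \<delta>_def by linarith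
      hence "\<epsilon> * (2 * (real n * T + SH + 1)) \<le> T" by (simp only: pos_le_divide_eq[OF d])
      moreover have "\<epsilon> * (real n * T + SH) \<le> \<epsilon> * (real n * T + SH + 1)" using e0 by simp
      ultimately show ?thesis by (simp add: algebra_simps)
    qed
    hence hlow: "h \<ge> T / 2" using hdiff by linarith
    define J1 where "J1 = {j\<in>J. nbad n j = 1}"
    have ediff: "\<bar>e - \<epsilon> * T / n\<bar> \<le> \<epsilon>\<^sup>2 * (T + SE)"
    proof -
      have "e = (\<Sum>j\<in>J1. Pe n w \<epsilon> j * E j) + (\<Sum>j\<in>J - J1. Pe n w \<epsilon> j * E j)"
        unfolding e_def using fin by (metis J1_def Diff_subset sum.subset_diff mem_Collect_eq subsetI add.commute)
      moreover have "(\<Sum>j\<in>J1. Pe n w \<epsilon> j * E j) = (1 - \<epsilon>) ^ (n - 1) * \<epsilon> * (T / n)"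
      proof -
        have "(\<Sum>j\<in>J1. Pe n w \<epsilon> j * E j) = (\<Sum>j\<in>J1. ((\<epsilon> * w) * (1 - \<epsilon>) ^ (n - 1)) * E j)"
          by (intro sum.cong refl) (simp add: J1_def Pe_form)
        also have "\<dots> = (1 - \<epsilon>) ^ (n - 1) * \<epsilon> * ((\<Sum>j\<in>J1. E j) * w)"
          by (simp add: sum_distrib_left sum_distrib_right algebra_simps)
        finally show ?thesis using S1 by (simp add: J1_def)
      qed
      ultimately have "e - \<epsilon> * T / n = - (1 - (1 - \<epsilon>) ^ (n - 1)) * \<epsilon> * (T / n) + (\<Sum>j\<in>J - J1. Pe n w \<epsilon> j * E j)"
        by (simp add: algebra_simps)
      hence "\<bar>e - \<epsilon> * T / n\<bar> \<le> \<bar>(1 - (1 - \<epsilon>) ^ (n - 1)) * \<epsilon> * (T / n)\<bar> + \<bar>\<Sum>j\<in>J - J1. Pe n w \<epsilon> j * E j\<bar>"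
        by (metis abs_minus_cancel abs_triangle_ineq mult_minus_left)
      also have "\<bar>(1 - (1 - \<epsilon>) ^ (n - 1)) * \<epsilon> * (T / n)\<bar> \<le> \<epsilon>\<^sup>2 * T"
      proof -
        have a: "0 \<le> 1 - (1 - \<epsilon>) ^ (n - 1)" "1 - (1 - \<epsilon>) ^ (n - 1) \<le> real (n - 1) * \<epsilon>"
          using one_minus_pow[of \<epsilon> "n - 1"] e0 el1 by auto
        have b: "real (n - 1) * \<epsilon> * (T / n) \<le> \<epsilon> * T"
        proof -
          have "real (n - 1) / n \<le> 1" using n by simp
          have "real (n - 1) * (T / n) = T * (real (n - 1) / n)" by simp
          also have "\<dots> \<le> T * 1" using \<open>real (n - 1) / n \<le> 1\<close> Tpos by (intro mult_left_mono) auto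
          finally have "real (n - 1) * (T / n) \<le> T" by simp
          hence "\<epsilon> * (real (n - 1) * (T / n)) \<le> \<epsilon> * T" using e0 by (intro mult_left_mono) auto
          thus ?thesis by (simp only: mult.assoc mult.left_commute)
        qed
        have "\<bar>(1 - (1 - \<epsilon>) ^ (n - 1)) * \<epsilon> * (T / n)\<bar> = (1 - (1 - \<epsilon>) ^ (n - 1)) * \<epsilon> * (T / n)"
          using a e0 Tpos by (simp add: abs_mult)
        also have "\<dots> \<le> (real (n - 1) * \<epsilon>) * \<epsilon> * (T / n)" using a e0 Tpos
          by (intro mult_right_mono) auto
        also have "\<dots> = \<epsilon> * (real (n - 1) * \<epsilon> * (T / n))" by simp
        also have "\<dots> \<le> \<epsilon> * (\<epsilon> * T)" using b e0 by (intro mult_left_mono) auto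
        finally show ?thesis by (simp add: power2_eq_square)
      qed
      also have "\<bar>\<Sum>j\<in>J - J1. Pe n w \<epsilon> j * E j\<bar> \<le> \<epsilon>\<^sup>2 * SE"
      proof -
        have "\<bar>\<Sum>j\<in>J - J1. Pe n w \<epsilon> j * E j\<bar> \<le> (\<Sum>j\<in>J - J1. \<bar>Pe n w \<epsilon> j * E j\<bar>)" by (rule sum_abs)
        also have "\<dots> \<le> (\<Sum>j\<in>J - J1. \<epsilon>\<^sup>2 * \<bar>E j\<bar>)"
        proof (rule sum_mono)
          fix j assume j: "j \<in> J - J1"
          show "\<bar>Pe n w \<epsilon> j * E j\<bar> \<le> \<epsilon>\<^sup>2 * \<bar>E j\<bar>"
          proof (cases "nbad n j = 0")
            case True
            hence "j = j0" using uniq j nbad0 by auto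
            thus ?thesis using E0 by simp
          next
            case False
            hence "nbad n j \<ge> 2" using j by (auto simp: J1_def)
            hence "Pe n w \<epsilon> j \<le> \<epsilon>\<^sup>2" "0 \<le> Pe n w \<epsilon> j" using Pe_le[OF e0 el1 w] by auto
            thus ?thesis by (simp add: abs_mult mult_right_mono)
          qed
        qed
        also have "\<dots> \<le> \<epsilon>\<^sup>2 * SE"
          unfolding SE_def sum_distrib_left[symmetric] using fin
          by (intro mult_left_mono sum_mono2) auto
        finally show ?thesis .
      qed
      finally show ?thesis by (simp add: algebra_simps)
    qed
    have "\<bar>e / h - \<epsilon> / n\<bar> = \<bar>e - \<epsilon> * h / n\<bar> / h"
      using hlow Tpos by (simp add: field_simps)
    also have "\<bar>e - \<epsilon> * h / n\<bar> \<le> \<bar>e - \<epsilon> * T / n\<bar> + \<epsilon> / n * \<bar>h - T\<bar>"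
    proof -
      have "e - \<epsilon> * h / n = (e - \<epsilon> * T / n) - \<epsilon> / n * (h - T)" by (simp add: algebra_simps diff_divide_distrib add_divide_distrib)
      hence "\<bar>e - \<epsilon> * h / n\<bar> \<le> \<bar>e - \<epsilon> * T / n\<bar> + \<bar>\<epsilon> / n * (h - T)\<bar>" by (metis abs_triangle_ineq4)
      thus ?thesis using e0 by (simp add: abs_mult)
    qed
    also have "\<dots> \<le> \<epsilon>\<^sup>2 * (T + SE) + \<epsilon> / n * (\<epsilon> * (real n * T + SH))"
      using ediff hdiff e0 by (intro add_mono mult_left_mono) auto
    also have "\<dots> \<le> \<epsilon>\<^sup>2 * C0"
    proof -
      have "\<epsilon> / n * (\<epsilon> * (real n * T + SH)) = \<epsilon>\<^sup>2 * ((real n * T + SH) / n)" by (simp add: power2_eq_square)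
      also have "\<dots> \<le> \<epsilon>\<^sup>2 * (real n * T + SH)"
      proof (rule mult_left_mono)
        have X: "0 \<le> real n * T + SH" using nT SH0 by linarith
        have "(real n * T + SH) / real n \<le> (real n * T + SH) / 1"
          using n X by (intro divide_left_mono) auto
        thus "(real n * T + SH) / real n \<le> real n * T + SH" by simp
      qed simp
      finally show ?thesis unfolding C0_def by (simp add: algebra_simps)
    qed
    finally have "\<bar>e / h - \<epsilon> / n\<bar> \<le> \<epsilon>\<^sup>2 * C0 / h" using hlow Tpos by (simp add: divide_right_mono)
    also have "\<dots> \<le> \<epsilon>\<^sup>2 * C0 / (T / 2)"
      using hlow Tpos SE0 SH0 unfolding C0_def by (intro divide_left_mono mult_nonneg_nonneg) auto
    also have "\<dots> = (2 * C0 / T) * \<bar>\<epsilon>\<^sup>2\<bar>" by simp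
    finally show ?thesis unfolding e_def h_def .
  qed
  show ?thesis
  proof (rule bigoI[where c="2 * C0 / T"])
    show "\<forall>\<^sub>F x in at_right 0. norm ((\<Sum>j\<in>J. Pe n w x j * E j) / (\<Sum>j\<in>J. Pe n w x j * H j) - x / real n) \<le> 2 * C0 / T * norm (x\<^sup>2)"
      unfolding eventually_at_right_field using \<delta>0 bound by (intro exI[of _ \<delta>]) auto
  qed
qed

lemma Ej_sum:
  assumes hs: "\<forall>i<n. \<forall>i'<n. \<exists>\<sigma> \<phi>. bij_betw \<sigma> {..<n} {..<n} \<and> \<sigma> i' = i \<and> (\<forall>a<n. \<forall>b<n. U a (\<sigma> b) = U a b * \<phi> a)"
    and n: "n > 0" and c: "\<forall>i<n. c i \<ge> 1"
    and jf: "\<forall>i<n. \<forall>b<n. jf i b = (if b = i then c i else 0)"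
  shows "(\<Sum>i<n. Ej U n (jf i)) = T0 U n / n"
proof -
  have "(\<Sum>i<n. Ej U n (jf i)) = (\<Sum>i<n. \<Sum>M0\<in>Yset U n. fM M0 * (cmod (AmpI U n i M0))^2)"
  proof (rule sum.cong[OF refl])
    fix i assume i: "i \<in> {..<n}"
    show "Ej U n (jf i) = (\<Sum>M0\<in>Yset U n. fM M0 * (cmod (AmpI U n i M0))^2)"
      by (rule Ej_one[OF n _ _ _ refl]) (use i c jf in auto)
  qed
  also have "\<dots> = (\<Sum>M0\<in>Yset U n. fM M0 * (\<Sum>i<n. (cmod (AmpI U n i M0))^2))"
    by (simp add: sum.swap[of _ "{..<n}"] sum_distrib_left)
  also have "\<dots> = (\<Sum>M0\<in>Yset U n. fM M0 * ((cmod (Amp U n M0))^2 / n))"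
    by (intro sum.cong refl) (simp add: key_sum[OF hs _ n])
  also have "\<dots> = T0 U n / n" by (simp add: T0_def sum_divide_distrib)
  finally show ?thesis .
qed

lemma ft_hs:
  assumes "\<forall>m\<in>set ns. m > 0"
  shows "\<forall>i<prod_list ns. \<forall>i'<prod_list ns. \<exists>\<sigma> \<phi>. bij_betw \<sigma> {..<prod_list ns} {..<prod_list ns} \<and> \<sigma> i' = i \<and>
     (\<forall>a<prod_list ns. \<forall>b<prod_list ns. fourier_tensor ns a (\<sigma> b) = fourier_tensor ns a b * \<phi> a)"
proof (intro allI impI)
  fix i i' assume i: "i < prod_list ns" "i' < prod_list ns"
  obtain \<sigma> \<phi> where s: "inj_on \<sigma> {..<prod_list ns}" "\<sigma> ` {..<prod_list ns} \<subseteq> {..<prod_list ns}" "\<sigma> i' = i"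
    "\<forall>a<prod_list ns. \<forall>b<prod_list ns. fourier_tensor ns a (\<sigma> b) = fourier_tensor ns a b * \<phi> a"
    using ft_shift[OF assms i(2) i(1)] by blast
  have "bij_betw \<sigma> {..<prod_list ns} {..<prod_list ns}"
    unfolding bij_betw_def using s(1) endo_inj_surj[OF _ s(2) s(1)] by simp
  thus "\<exists>\<sigma> \<phi>. bij_betw \<sigma> {..<prod_list ns} {..<prod_list ns} \<and> \<sigma> i' = i \<and>
     (\<forall>a<prod_list ns. \<forall>b<prod_list ns. fourier_tensor ns a (\<sigma> b) = fourier_tensor ns a b * \<phi> a)"
    using s(3,4) by blast
qed

lemma ft_T0_pos:
  assumes "\<forall>m\<in>set ns. m > 0" "prod_list ns \<ge> 3"
  shows "T0 (fourier_tensor ns) (prod_list ns) > 0"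
proof -
  define n where "n = prod_list ns"
  define v where "v = 1 / complex_of_real (sqrt (real n))"
  define s where "s = complex_of_real (sqrt (real n))"
  have n3: "n \<ge> 3" using assms by (simp add: n_def)
  have sq: "sqrt (real n) \<noteq> 0" using n3 by simp
  have v0: "v \<noteq> 0" using sq by (simp add: v_def)
  have sv: "s = of_nat n * v"
  proof -
    have "complex_of_nat n = complex_of_real (sqrt (real n)) * complex_of_real (sqrt (real n))"
    proof -
      have "real n = sqrt (real n) * sqrt (real n)" by simp
      hence "complex_of_real (real n) = complex_of_real (sqrt (real n) * sqrt (real n))" by (rule arg_cong)
      thus ?thesis by (simp only: of_real_of_nat_eq of_real_mult)
    qed
    thus ?thesis using sq by (simp add: s_def v_def)
  qed
  have row0: "\<forall>b<n. fourier_tensor ns 0 b = v" by (simp add: ft_row0 v_def n_def)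
  have col: "\<forall>b<n. (\<Sum>a<n. fourier_tensor ns a b) = (if b = 0 then s else 0)"
    using ft_colsum[OF assms(1)] by (simp add: s_def n_def)
  have "Yset (fourier_tensor ns) n \<noteq> {}"
    by (rule Yset_nonempty[OF n3 pos_sum[OF n3 row0 col v0 sv]])
  thus ?thesis unfolding n_def by (rule T0_pos)
qed

lemma main_generic:
  fixes U :: "nat \<Rightarrow> nat \<Rightarrow> complex"
  assumes n: "n > 0" and Tp: "T0 U n > 0"
    and fin: "finite J" and j0: "j0 \<in> J" and uniq: "\<forall>j\<in>J. (\<forall>i<n. j i = 0) \<longrightarrow> j = j0" and j0z: "\<forall>i<n. j0 i = 0"
    and w: "0 < w" "w \<le> 1"
    and S1: "(\<Sum>j\<in>{j\<in>J. nbad n j = 1}. Ej U n j) * w = T0 U n / n"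
  shows "(\<lambda>\<epsilon>. error_rate U n J (Pe n w \<epsilon>) - \<epsilon> / n) \<in> O[at_right 0](\<lambda>\<epsilon>. \<epsilon>\<^sup>2)"
proof -
  have eq: "(\<lambda>\<epsilon>. error_rate U n J (Pe n w \<epsilon>) - \<epsilon> / n) =
    (\<lambda>\<epsilon>. (\<Sum>j\<in>J. Pe n w \<epsilon> j * Ej U n j) / (\<Sum>j\<in>J. Pe n w \<epsilon> j * Hj U n j) - \<epsilon> / n)"
    by (simp add: error_rate_def error_joint_def heralding_rate_def Ej_def Hj_def)
  show ?thesis unfolding eq
    by (rule asym[where E="Ej U n" and H="Hj U n" and T="T0 U n", OF fin n j0 uniq j0z Hj_zero[where U=U, OF n j0z] Tp Ej_zero[where U=U, OF j0z] w S1])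
qed

definition jfn :: "nat \<Rightarrow> nat \<Rightarrow> nat \<Rightarrow> nat \<Rightarrow> nat" where
  "jfn n i c = restrict (\<lambda>x. if x = i then c else 0) {0..<n}"

lemma nbad_jfn: "i < n \<Longrightarrow> c \<ge> 1 \<Longrightarrow> nbad n (jfn n i c) = 1"
proof -
  assume "i < n" "c \<ge> 1"
  hence "{x\<in>{..<n}. jfn n i c x \<noteq> 0} = {i}" by (auto simp: jfn_def)
  thus ?thesis by (simp add: nbad_def)
qed

lemma nbad1_jfn: assumes "nbad n j = 1" "j \<in> extensional {0..<n}"
  obtains i where "i < n" "j i \<noteq> 0" "j = jfn n i (j i)"
proof -
  have "card {x\<in>{..<n}. j x \<noteq> 0} = 1" using assms(1) by (simp add: nbad_def)
  then obtain i where i: "{x\<in>{..<n}. j x \<noteq> 0} = {i}" by (rule card_1_singletonE)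
  have "i \<in> {x\<in>{..<n}. j x \<noteq> 0}" unfolding i by simp
  hence il: "i < n" "j i \<noteq> 0" by auto
  have "j = jfn n i (j i)"
  proof
    fix x show "j x = jfn n i (j i) x"
    proof (cases "x < n")
      case True
      show ?thesis
      proof (cases "x = i")
        case True thus ?thesis using il by (simp add: jfn_def)
      next
        case False
        have "x \<in> {x\<in>{..<n}. j x \<noteq> 0} \<longleftrightarrow> x \<in> {i}" by (simp only: i)
        hence "j x = 0" using False \<open>x < n\<close> by simp
        thus ?thesis using False \<open>x < n\<close> by (simp add: jfn_def)
      qed
    next
      case False
      thus ?thesis using assms(2) by (simp add: jfn_def extensional_def)
    qed
  qed
  thus ?thesis using il that by blast
qed

lemma jfn_inj: "jfn n i c = jfn n i' c' \<Longrightarrow> i < n \<Longrightarrow> c \<ge> 1 \<Longrightarrow> i = i' \<and> c = c'"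
proof -
  assume e: "jfn n i c = jfn n i' c'" and i: "i < n" and c: "c \<ge> 1"
  have "jfn n i c i = jfn n i' c' i" using e by simp
  hence "c = (if i = i' then c' else 0)" using i by (simp add: jfn_def)
  thus ?thesis using c by (cases "i = i'") auto
qed

theorem theorem1:
  fixes ns :: "nat list"
  assumes "\<forall>m\<in>set ns. m \<ge> 2"
    and "prod_list ns > 2"
  shows "(\<forall>R::nat. R \<ge> 1 \<longrightarrow>
           (\<lambda>\<epsilon>::real. error_rate (fourier_tensor ns) (prod_list ns) (urs_labels (prod_list ns) R)
                          (urs_prob (prod_list ns) R \<epsilon>) - \<epsilon> / real (prod_list ns))
             \<in> O[at_right 0](\<lambda>\<epsilon>. \<epsilon>\<^sup>2))
       \<and> (\<lambda>\<epsilon>::real. error_rate (fourier_tensor ns) (prod_list ns) (obb_labels (prod_list ns))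
                          (obb_prob (prod_list ns) \<epsilon>) - \<epsilon> / real (prod_list ns))
             \<in> O[at_right 0](\<lambda>\<epsilon>. \<epsilon>\<^sup>2)"
proof -
  define n where "n = prod_list ns"
  define U where "U = fourier_tensor ns"
  have pos: "\<forall>m\<in>set ns. m > 0" using assms(1) by fastforce
  have n3: "n \<ge> 3" using assms(2) by (simp add: n_def)
  have n: "n > 0" using n3 by simp
  have hs: "\<forall>i<n. \<forall>i'<n. \<exists>\<sigma> \<phi>. bij_betw \<sigma> {..<n} {..<n} \<and> \<sigma> i' = i \<and> (\<forall>a<n. \<forall>b<n. U a (\<sigma> b) = U a b * \<phi> a)"
    using ft_hs[OF pos] by (simp add: n_def U_def)
  have Tp: "T0 U n > 0" using ft_T0_pos[OF pos] n3 by (simp add: n_def U_def)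
  define j0 where "j0 = restrict (\<lambda>_. 0::nat) {0..<n}"
  have j0z: "\<forall>i<n. j0 i = 0" by (simp add: j0_def)
  have uniqG: "j = j0" if "j \<in> extensional {0..<n}" "\<forall>i<n. j i = 0" for j
  proof
    fix x show "j x = j0 x"
      using that by (cases "x < n") (auto simp: j0_def extensional_def)
  qed
  have urs: "(\<lambda>\<epsilon>::real. error_rate U n (urs_labels n R) (urs_prob n R \<epsilon>) - \<epsilon> / real n) \<in> O[at_right 0](\<lambda>\<epsilon>. \<epsilon>\<^sup>2)"
    if R: "R \<ge> 1" for R
  proof -
    define J where "J = urs_labels n R"
    have pe: "urs_prob n R \<epsilon> = Pe n (1 / real R) \<epsilon>" for \<epsilon>
    proof -
      have "\<epsilon> * (1 / real R) = \<epsilon> / real R" by simp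
      thus ?thesis by (intro ext) (simp only: urs_prob_def Pe_def)
    qed
    have fin: "finite J" by (simp add: J_def urs_labels_def finite_PiE)
    have j0J: "j0 \<in> J" by (auto simp: J_def urs_labels_def j0_def)
    have uniq: "\<forall>j\<in>J. (\<forall>i<n. j i = 0) \<longrightarrow> j = j0"
      using uniqG by (auto simp: J_def urs_labels_def PiE_def)
    have J1: "{j\<in>J. nbad n j = 1} = (\<lambda>(i, c). jfn n i c) ` ({..<n} \<times> {1..R})"
    proof
      show "{j\<in>J. nbad n j = 1} \<subseteq> (\<lambda>(i, c). jfn n i c) ` ({..<n} \<times> {1..R})"
      proof
        fix j assume "j \<in> {j\<in>J. nbad n j = 1}"
        hence j: "j \<in> J" "nbad n j = 1" by auto
        have ext: "j \<in> extensional {0..<n}" using j(1) by (simp add: J_def urs_labels_def PiE_def)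
        obtain i where i: "i < n" "j i \<noteq> 0" "j = jfn n i (j i)" by (rule nbad1_jfn[OF j(2) ext])
        have "j i \<in> {0..R}" using j(1) i(1) by (auto simp: J_def urs_labels_def)
        hence "j i \<in> {1..R}" using i(2) by auto
        hence "(i, j i) \<in> {..<n} \<times> {1..R}" using i(1) by simp
        moreover have "j = (\<lambda>(i, c). jfn n i c) (i, j i)" using i(3) by simp
        ultimately show "j \<in> (\<lambda>(i, c). jfn n i c) ` ({..<n} \<times> {1..R})" by (rule rev_image_eqI)
      qed
    next
      show "(\<lambda>(i, c). jfn n i c) ` ({..<n} \<times> {1..R}) \<subseteq> {j\<in>J. nbad n j = 1}"
      proof
        fix j assume "j \<in> (\<lambda>(i, c). jfn n i c) ` ({..<n} \<times> {1..R})"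
        then obtain i c where ic: "i < n" "c \<in> {1..R}" "j = jfn n i c" by auto
        have "j \<in> J" using ic by (auto simp: J_def urs_labels_def jfn_def)
        moreover have "nbad n j = 1" using ic nbad_jfn by auto
        ultimately show "j \<in> {j\<in>J. nbad n j = 1}" by simp
      qed
    qed
    have "(\<Sum>j\<in>{j\<in>J. nbad n j = 1}. Ej U n j) = (\<Sum>p\<in>{..<n} \<times> {1..R}. Ej U n (jfn n (fst p) (snd p)))"
      unfolding J1
    proof (rule sum.reindex_cong[OF _ refl])
      show "inj_on (\<lambda>(i, c). jfn n i c) ({..<n} \<times> {1..R})"
        by (rule inj_onI) (auto dest: jfn_inj)
    qed (simp add: case_prod_beta)
    also have "\<dots> = (\<Sum>c\<in>{1..R}. \<Sum>i<n. Ej U n (jfn n i c))"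
    proof -
      have "(\<Sum>p\<in>{..<n} \<times> {1..R}. Ej U n (jfn n (fst p) (snd p))) = (\<Sum>i<n. \<Sum>c\<in>{1..R}. Ej U n (jfn n i c))"
        by (simp add: sum.cartesian_product case_prod_beta)
      also have "\<dots> = (\<Sum>c\<in>{1..R}. \<Sum>i<n. Ej U n (jfn n i c))" by (rule sum.swap)
      finally show ?thesis .
    qed
    also have "\<dots> = (\<Sum>c\<in>{1..R}. T0 U n / n)"
    proof (rule sum.cong[OF refl])
      fix c assume c: "c \<in> {1..R}"
      show "(\<Sum>i<n. Ej U n (jfn n i c)) = T0 U n / n"
        by (rule Ej_sum[OF hs n, of "\<lambda>_. c"]) (use c in \<open>auto simp: jfn_def\<close>)
    qed
    also have "\<dots> = real R * (T0 U n / n)" by simp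
    finally have S1: "(\<Sum>j\<in>{j\<in>J. nbad n j = 1}. Ej U n j) * (1 / real R) = T0 U n / n"
      using R by simp
    have w: "0 < 1 / real R" "1 / real R \<le> 1" using R by auto
    show ?thesis
      unfolding pe J_def[symmetric]
      by (rule main_generic[OF n Tp fin j0J uniq j0z w S1])
  qed
  have obb: "(\<lambda>\<epsilon>::real. error_rate U n (obb_labels n) (obb_prob n \<epsilon>) - \<epsilon> / real n) \<in> O[at_right 0](\<lambda>\<epsilon>. \<epsilon>\<^sup>2)"
  proof -
    define J where "J = obb_labels n"
    have pe: "obb_prob n \<epsilon> = Pe n 1 \<epsilon>" for \<epsilon>
    proof -
      have "\<epsilon> * 1 = \<epsilon>" by simp
      thus ?thesis by (intro ext) (simp only: obb_prob_def Pe_def)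
    qed
    have fin: "finite J" by (simp add: J_def obb_labels_def finite_PiE)
    have j0J: "j0 \<in> J" by (auto simp: J_def obb_labels_def j0_def)
    have uniq: "\<forall>j\<in>J. (\<forall>i<n. j i = 0) \<longrightarrow> j = j0"
      using uniqG by (auto simp: J_def obb_labels_def PiE_def)
    have J1: "{j\<in>J. nbad n j = 1} = (\<lambda>i. jfn n i (Suc i)) ` {..<n}"
    proof
      show "{j\<in>J. nbad n j = 1} \<subseteq> (\<lambda>i. jfn n i (Suc i)) ` {..<n}"
      proof
        fix j assume "j \<in> {j\<in>J. nbad n j = 1}"
        hence j: "j \<in> J" "nbad n j = 1" by auto
        have ext: "j \<in> extensional {0..<n}" using j(1) by (simp add: J_def obb_labels_def PiE_def)
        obtain i where i: "i < n" "j i \<noteq> 0" "j = jfn n i (j i)" by (rule nbad1_jfn[OF j(2) ext])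
        have "j i \<in> {0, Suc i}" using j(1) i(1) by (auto simp: J_def obb_labels_def)
        hence "j i = Suc i" using i(2) by auto
        hence "j = (\<lambda>i. jfn n i (Suc i)) i" using i(3) by simp
        thus "j \<in> (\<lambda>i. jfn n i (Suc i)) ` {..<n}" using i(1) by (intro rev_image_eqI[of i]) simp_all
      qed
    next
      show "(\<lambda>i. jfn n i (Suc i)) ` {..<n} \<subseteq> {j\<in>J. nbad n j = 1}"
      proof
        fix j assume "j \<in> (\<lambda>i. jfn n i (Suc i)) ` {..<n}"
        then obtain i where ic: "i < n" "j = jfn n i (Suc i)" by auto
        have "j \<in> J" using ic by (auto simp: J_def obb_labels_def jfn_def)
        moreover have "nbad n j = 1" using ic nbad_jfn by auto
        ultimately show "j \<in> {j\<in>J. nbad n j = 1}" by simp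
      qed
    qed
    have "(\<Sum>j\<in>{j\<in>J. nbad n j = 1}. Ej U n j) = (\<Sum>i<n. Ej U n (jfn n i (Suc i)))"
      unfolding J1
    proof (rule sum.reindex_cong[OF _ refl refl])
      show "inj_on (\<lambda>i. jfn n i (Suc i)) {..<n}"
        by (rule inj_onI) (auto dest: jfn_inj)
    qed
    also have "\<dots> = T0 U n / n"
      by (rule Ej_sum[OF hs n, of "\<lambda>i. Suc i"]) (auto simp: jfn_def)
    finally have S1: "(\<Sum>j\<in>{j\<in>J. nbad n j = 1}. Ej U n j) * 1 = T0 U n / n" by simp
    have w: "0 < (1::real)" "(1::real) \<le> 1" by auto
    show ?thesis
      unfolding pe J_def[symmetric]
      by (rule main_generic[OF n Tp fin j0J uniq j0z w S1])
  qed
  show ?thesis using urs obb by (simp add: n_def U_def)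
qed

end
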